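(* Let $l>0$, $m>0$, $W=lV\oplus mV^*$ and $U=U(GL)$. Consider the generating set $\mathcal M$ of ${\bf k}[W]^U$ consisting of the entries of $\overline{V^*}\,\overline V$, the lower minors of $\overline V$ of orders $1,\dots,\min\{l,n\}$, and the left minors of $\overline{V^*}$ of orders $1,\dots,\min\{m,n\}$. Then the ideal of all polynomial relations among the elements of $\mathcal M$ is generated by the relations among the lower minors of $\overline V$ alone (the Plücker and incidence relations) together with the relations among the left minors of $\overline{V^*}$ alone (the analogous Plücker and incidence relations) if and only if $l+m\le n$.
   Context: ${\bf k}$ algebraically closed of characteristic $0$; $V$ $n$-dimensional with basis $e_1,\dots,e_n$ and dual basis of $V^*$; $U(GL)$ the upper unitriangular matrices acting on $V$ and dually on $V^*$. $\overline V$ is the $n\times l$ matrix of coordinate functions on $lV$ ($(i,j)$ entry: $i$-th coordinate of the $j$-th vector); $\overline{V^*}$ is the $m\times n$ matrix of coordinate functions on $mV^*$ ($(i,j)$ entry: $j$-th coordinate of the $i$-th covector). A lower minor of order $k$ uses the last $k$ rows and any $k$ columns; a left minor of order $k$ uses the first $k$ columns and any $k$ rows. The ideal of relations is the kernel of the homomorphism from the polynomial ring with one variable per element of $\mathcal M$ to ${\bf k}[W]$; the relations among lower minors of $\overline V$ alone are those polynomials in the lower-minor variables lying in this kernel, similarly for $\overline{V^*}$. *)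

theory Defs
  imports "HOL-Library.Poly_Mapping" "HOL-Computational_Algebra.Polynomial" "HOL-Combinatorics.Permutations"
begin

type_synonym ('v, 'k) mpoly = "('v \<Rightarrow>\<^sub>0 nat) \<Rightarrow>\<^sub>0 'k"

definition mvar :: "'v \<Rightarrow> ('v, 'k::comm_ring_1) mpoly" where
  "mvar v = Poly_Mapping.single (Poly_Mapping.single v 1) 1"

definition mconst :: "'k::comm_ring_1 \<Rightarrow> ('v, 'k) mpoly" where
  "mconst c = Poly_Mapping.single 0 c"

definition mvars :: "('v, 'k::zero) mpoly \<Rightarrow> 'v set" where
  "mvars p = (\<Union>t \<in> Poly_Mapping.keys p. Poly_Mapping.keys (t :: 'v \<Rightarrow>\<^sub>0 nat))"

definition msubst :: "('v \<Rightarrow> ('w, 'k::comm_ring_1) mpoly) \<Rightarrow> ('v, 'k) mpoly \<Rightarrow> ('w, 'k) mpoly" where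
  "msubst \<sigma> p = (\<Sum>t \<in> Poly_Mapping.keys p. mconst (Poly_Mapping.lookup p t) * (\<Prod>v \<in> Poly_Mapping.keys t. \<sigma> v ^ Poly_Mapping.lookup t v))"

definition ideal_gen_in :: "'a::comm_ring_1 set \<Rightarrow> 'a set \<Rightarrow> 'a set" where
  "ideal_gen_in R G = {p. \<exists>S c. finite S \<and> S \<subseteq> G \<and> (\<forall>g\<in>S. c g \<in> R) \<and> p = (\<Sum>g\<in>S. c g * g)}"

definition alg_closed_field :: "'k::field itself \<Rightarrow> bool" where
  "alg_closed_field _ = (\<forall>p :: 'k poly. 0 < degree p \<longrightarrow> (\<exists>x. poly p x = 0))"

definition ldet :: "nat \<Rightarrow> (nat \<Rightarrow> nat \<Rightarrow> 'a::comm_ring_1) \<Rightarrow> 'a" where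
  "ldet k A = (\<Sum>\<pi> \<in> {\<pi>. \<pi> permutes {0..<k}}. of_int (sign \<pi>) * (\<Prod>i<k. A i (\<pi> i)))"

text \<open>Coordinates on W = lV + mV*: Xc i j is the i-th coordinate of the j-th vector
  (entry (i,j) of the n x l matrix Vbar); Yc i j is the j-th coordinate of the i-th
  covector (entry (i,j) of the m x n matrix V*bar). Indices are 0-based.\<close>
datatype wvar = Xc nat nat | Yc nat nat

text \<open>Labels of the generators in M: Ent i j = entry (i,j) of V*bar Vbar;
  Low S = lower minor of Vbar with column set S; Lft S = left minor of V*bar with row set S.\<close>
datatype mlab = Ent nat nat | Low "nat set" | Lft "nat set"

definition Vbar :: "nat \<Rightarrow> nat \<Rightarrow> (wvar, 'k::comm_ring_1) mpoly" where
  "Vbar i j = mvar (Xc i j)"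

definition Vsbar :: "nat \<Rightarrow> nat \<Rightarrow> (wvar, 'k::comm_ring_1) mpoly" where
  "Vsbar i j = mvar (Yc i j)"

definition lower_minor :: "nat \<Rightarrow> nat set \<Rightarrow> (wvar, 'k::comm_ring_1) mpoly" where
  "lower_minor n S = ldet (card S)
     (\<lambda>a b. Vbar (n - card S + a) (sorted_list_of_set S ! b))"

definition left_minor :: "nat set \<Rightarrow> (wvar, 'k::comm_ring_1) mpoly" where
  "left_minor S = ldet (card S) (\<lambda>a b. Vsbar (sorted_list_of_set S ! a) b)"

definition gen_poly :: "nat \<Rightarrow> mlab \<Rightarrow> (wvar, 'k::comm_ring_1) mpoly" where
  "gen_poly n L = (case L of
      Ent i j \<Rightarrow> (\<Sum>k<n. Vsbar i k * Vbar k j)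
    | Low S \<Rightarrow> lower_minor n S
    | Lft S \<Rightarrow> left_minor S)"

definition ent_labels :: "nat \<Rightarrow> nat \<Rightarrow> mlab set" where
  "ent_labels l m = {Ent i j | i j. i < m \<and> j < l}"

definition low_labels :: "nat \<Rightarrow> nat \<Rightarrow> mlab set" where
  "low_labels n l = {Low S | S. S \<subseteq> {0..<l} \<and> 1 \<le> card S \<and> card S \<le> min l n}"

definition lft_labels :: "nat \<Rightarrow> nat \<Rightarrow> mlab set" where
  "lft_labels n m = {Lft S | S. S \<subseteq> {0..<m} \<and> 1 \<le> card S \<and> card S \<le> min m n}"

definition M_labels :: "nat \<Rightarrow> nat \<Rightarrow> nat \<Rightarrow> mlab set" where
  "M_labels n l m = ent_labels l m \<union> low_labels n l \<union> lft_labels n m"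

definition relations :: "'k::comm_ring_1 itself \<Rightarrow> nat \<Rightarrow> mlab set \<Rightarrow> (mlab, 'k) mpoly set" where
  "relations _ n L = {p. mvars p \<subseteq> L \<and> msubst (gen_poly n) p = 0}"

definition polys_in :: "'k::comm_ring_1 itself \<Rightarrow> mlab set \<Rightarrow> (mlab, 'k) mpoly set" where
  "polys_in _ L = {p. mvars p \<subseteq> L}"

end

theory Submission
  imports Defs "Jordan_Normal_Form.Determinant" "HOL-Library.Nat_Bijection"
begin

lemma pm_expand: "(p :: 'a \<Rightarrow>\<^sub>0 'b::comm_monoid_add) = (\<Sum>t\<in>Poly_Mapping.keys p. Poly_Mapping.single t (Poly_Mapping.lookup p t))"
proof (rule poly_mapping_eqI)
  fix x
  show "Poly_Mapping.lookup p x = Poly_Mapping.lookup (\<Sum>t\<in>Poly_Mapping.keys p. Poly_Mapping.single t (Poly_Mapping.lookup p t)) x"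
    unfolding lookup_sum lookup_single
    by (cases "x \<in> Poly_Mapping.keys p") (auto simp: when_def in_keys_iff)
qed

definition mev :: "('v \<Rightarrow> ('w, 'k::comm_ring_1) mpoly) \<Rightarrow> ('v \<Rightarrow>\<^sub>0 nat) \<Rightarrow> ('w, 'k) mpoly" where
  "mev \<sigma> t = (\<Prod>v\<in>Poly_Mapping.keys t. \<sigma> v ^ Poly_Mapping.lookup t v)"

lemma mev_superset:
  assumes "finite K" "Poly_Mapping.keys t \<subseteq> K"
  shows "mev \<sigma> t = (\<Prod>v\<in>K. \<sigma> v ^ Poly_Mapping.lookup t v)"
  unfolding mev_def
  by (rule prod.mono_neutral_left) (use assms in \<open>auto simp: in_keys_iff\<close>)

lemma mev_add: "mev \<sigma> (s + t) = mev \<sigma> s * mev \<sigma> t"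
proof -
  let ?K = "Poly_Mapping.keys s \<union> Poly_Mapping.keys t"
  have "mev \<sigma> (s + t) = (\<Prod>v\<in>?K. \<sigma> v ^ Poly_Mapping.lookup (s+t) v)"
    by (rule mev_superset) (auto dest: set_mp[OF keys_add])
  also have "\<dots> = (\<Prod>v\<in>?K. \<sigma> v ^ Poly_Mapping.lookup s v) * (\<Prod>v\<in>?K. \<sigma> v ^ Poly_Mapping.lookup t v)"
    unfolding lookup_add power_add prod.distrib ..
  also have "\<dots> = mev \<sigma> s * mev \<sigma> t"
  proof -
    have 1: "mev \<sigma> s = (\<Prod>v\<in>?K. \<sigma> v ^ Poly_Mapping.lookup s v)" by (rule mev_superset) auto
    have 2: "mev \<sigma> t = (\<Prod>v\<in>?K. \<sigma> v ^ Poly_Mapping.lookup t v)" by (rule mev_superset) auto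
    show ?thesis unfolding 1 2 ..
  qed
  finally show ?thesis .
qed

lemma mev_zero[simp]: "mev \<sigma> 0 = 1"
  by (simp add: mev_def)

lemma mconst_0[simp]: "mconst 0 = 0" by (simp add: mconst_def)
lemma mconst_1[simp]: "mconst 1 = 1" by (simp add: mconst_def)
lemma mconst_add: "mconst (a + b) = mconst a + mconst b" by (simp add: mconst_def single_add)
lemma mconst_mult: "mconst (a * b) = mconst a * mconst b" by (simp add: mconst_def mult_single)
lemma mconst_uminus: "mconst (- a) = - mconst a" by (simp add: mconst_def single_uminus)
lemma mconst_diff: "mconst (a - b) = mconst a - mconst b" by (simp add: mconst_def single_diff)
lemma mconst_of_int: "mconst (of_int z) = of_int z" by (simp add: mconst_def)
lemma mconst_sum: "mconst (sum f A) = (\<Sum>x\<in>A. mconst (f x))"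
  by (induction A rule: infinite_finite_induct) (auto simp: mconst_add)

lemma msubst_superset:
  assumes "finite K" "Poly_Mapping.keys p \<subseteq> K"
  shows "msubst \<sigma> p = (\<Sum>t\<in>K. mconst (Poly_Mapping.lookup p t) * mev \<sigma> t)"
  unfolding msubst_def mev_def[symmetric]
  by (rule sum.mono_neutral_left) (use assms in \<open>auto simp: in_keys_iff\<close>)

lemma msubst_add: "msubst \<sigma> (p + q) = msubst \<sigma> p + msubst \<sigma> q"
proof -
  let ?K = "Poly_Mapping.keys p \<union> Poly_Mapping.keys q"
  have "msubst \<sigma> (p + q) = (\<Sum>t\<in>?K. mconst (Poly_Mapping.lookup (p+q) t) * mev \<sigma> t)"
    by (rule msubst_superset) (auto dest: set_mp[OF keys_add])
  also have "\<dots> = (\<Sum>t\<in>?K. mconst (Poly_Mapping.lookup p t) * mev \<sigma> t) + (\<Sum>t\<in>?K. mconst (Poly_Mapping.lookup q t) * mev \<sigma> t)"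
    unfolding lookup_add mconst_add distrib_right sum.distrib ..
  also have "\<dots> = msubst \<sigma> p + msubst \<sigma> q"
  proof -
    have 1: "msubst \<sigma> p = (\<Sum>t\<in>?K. mconst (Poly_Mapping.lookup p t) * mev \<sigma> t)" by (rule msubst_superset) auto
    have 2: "msubst \<sigma> q = (\<Sum>t\<in>?K. mconst (Poly_Mapping.lookup q t) * mev \<sigma> t)" by (rule msubst_superset) auto
    show ?thesis unfolding 1 2 ..
  qed
  finally show ?thesis .
qed

lemma msubst_0[simp]: "msubst \<sigma> 0 = 0"
  by (simp add: msubst_def)

lemma msubst_sum: "msubst \<sigma> (sum f A) = (\<Sum>x\<in>A. msubst \<sigma> (f x))"
  by (induction A rule: infinite_finite_induct) (auto simp: msubst_add)

lemma msubst_single: "msubst \<sigma> (Poly_Mapping.single t c) = mconst c * mev \<sigma> t"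
proof -
  have "msubst \<sigma> (Poly_Mapping.single t c) = (\<Sum>s\<in>{t}. mconst (Poly_Mapping.lookup (Poly_Mapping.single t c) s) * mev \<sigma> s)"
    by (rule msubst_superset) auto
  then show ?thesis by simp
qed

lemma msubst_mult: "msubst \<sigma> (p * q) = msubst \<sigma> p * msubst \<sigma> q"
proof -
  have "p * q = (\<Sum>u\<in>Poly_Mapping.keys p. Poly_Mapping.single u (Poly_Mapping.lookup p u))
       * (\<Sum>v\<in>Poly_Mapping.keys q. Poly_Mapping.single v (Poly_Mapping.lookup q v))"
    by (simp only: pm_expand[symmetric])
  also have "\<dots> = (\<Sum>u\<in>Poly_Mapping.keys p. \<Sum>v\<in>Poly_Mapping.keys q.
      Poly_Mapping.single (u + v) (Poly_Mapping.lookup p u * Poly_Mapping.lookup q v))"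
    unfolding sum_distrib_right unfolding sum_distrib_left mult_single ..
  finally have eq: "p * q = \<dots>" .
  have "msubst \<sigma> (p * q) = (\<Sum>u\<in>Poly_Mapping.keys p. \<Sum>v\<in>Poly_Mapping.keys q.
      mconst (Poly_Mapping.lookup p u * Poly_Mapping.lookup q v) * mev \<sigma> (u + v))"
    unfolding eq msubst_sum msubst_single ..
  also have "\<dots> = (\<Sum>u\<in>Poly_Mapping.keys p. \<Sum>v\<in>Poly_Mapping.keys q.
      mconst (Poly_Mapping.lookup p u) * mev \<sigma> u * (mconst (Poly_Mapping.lookup q v) * mev \<sigma> v))"
    unfolding mconst_mult mev_add by (intro sum.cong refl) (simp add: mult_ac)
  also have "\<dots> = msubst \<sigma> p * msubst \<sigma> q"
    apply (unfold msubst_def mev_def[symmetric])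
    apply (unfold sum_distrib_right)
    apply (unfold sum_distrib_left)
    apply (rule refl)
    done
  finally show ?thesis .
qed

lemma msubst_mconst[simp]: "msubst \<sigma> (mconst c) = mconst c"
  unfolding mconst_def msubst_single by simp

lemma msubst_1[simp]: "msubst \<sigma> 1 = 1"
  using msubst_mconst[of \<sigma> 1] by simp

lemma msubst_mvar[simp]: "msubst \<sigma> (mvar v) = \<sigma> v"
  unfolding mvar_def msubst_single by (simp add: mev_def)

lemma msubst_uminus: "msubst \<sigma> (- p) = - msubst \<sigma> p"
proof -
  have "msubst \<sigma> (- p) + msubst \<sigma> p = 0"
    by (simp add: msubst_add[symmetric])
  then show ?thesis by (simp add: eq_neg_iff_add_eq_0)
qed

lemma msubst_diff: "msubst \<sigma> (p - q) = msubst \<sigma> p - msubst \<sigma> q"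
  using msubst_add[of \<sigma> p "- q"] by (simp add: msubst_uminus)

lemma msubst_power: "msubst \<sigma> (p ^ k) = msubst \<sigma> p ^ k"
  by (induction k) (auto simp: msubst_mult)

lemma msubst_prod: "msubst \<sigma> (prod f A) = (\<Prod>x\<in>A. msubst \<sigma> (f x))"
  by (induction A rule: infinite_finite_induct) (auto simp: msubst_mult)

lemma msubst_of_int[simp]: "msubst \<sigma> (of_int z) = of_int z"
  using msubst_mconst[of \<sigma> "of_int z"] by (simp add: mconst_of_int)

lemma msubst_comp: "msubst \<tau> (msubst \<sigma> p) = msubst (\<lambda>v. msubst \<tau> (\<sigma> v)) p"
  unfolding msubst_def[of \<sigma>] msubst_sum msubst_mult msubst_mconst msubst_prod msubst_power
  unfolding msubst_def[of "\<lambda>v. msubst \<tau> (\<sigma> v)"] ..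

lemma keys_subset_mvars: "t \<in> Poly_Mapping.keys p \<Longrightarrow> Poly_Mapping.keys t \<subseteq> mvars p"
  by (auto simp: mvars_def)

lemma msubst_cong:
  assumes "\<And>v. v \<in> mvars p \<Longrightarrow> \<sigma> v = \<sigma>' v"
  shows "msubst \<sigma> p = msubst \<sigma>' p"
  unfolding msubst_def
proof (intro sum.cong refl arg_cong2[where f=times] prod.cong)
  fix t v assume "t \<in> Poly_Mapping.keys p" "v \<in> Poly_Mapping.keys t"
  then have "v \<in> mvars p" using keys_subset_mvars by blast
  then show "\<sigma> v ^ Poly_Mapping.lookup t v = \<sigma>' v ^ Poly_Mapping.lookup t v" using assms by simp
qed

lemma mvar_power: "(mvar v :: ('v,'k::comm_ring_1) mpoly) ^ k = Poly_Mapping.single (Poly_Mapping.single v k) 1"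
  by (induction k) (auto simp: mvar_def mult_single single_add[symmetric] add.commute)

lemma prod_single_one:
  "(\<Prod>x\<in>A. Poly_Mapping.single (f x) (1::'b::comm_semiring_1)) = Poly_Mapping.single (\<Sum>x\<in>A. f x) 1"
  by (induction A rule: infinite_finite_induct) (auto simp: mult_single)

lemma mev_mvar: "mev mvar t = Poly_Mapping.single t (1::'k::comm_ring_1)"
  unfolding mev_def mvar_power prod_single_one
  using pm_expand[of t] by simp

lemma msubst_id: "msubst mvar p = p"
  unfolding msubst_def mev_def[symmetric] mev_mvar mconst_def
  by (subst (2) pm_expand[of p]) (simp add: mult_single)

lemma msubst_fix:
  assumes "\<And>v. v \<in> mvars p \<Longrightarrow> \<sigma> v = mvar v"
  shows "msubst \<sigma> p = p"
  using msubst_cong[of p \<sigma> mvar] assms msubst_id by metis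


lemma mvars_iff: "mvars p \<subseteq> A \<longleftrightarrow> (\<forall>t\<in>Poly_Mapping.keys p. Poly_Mapping.keys t \<subseteq> A)"
  by (auto simp: mvars_def)

lemma mvars_0[simp]: "mvars 0 = {}"
  by (simp add: mvars_def)

lemma mvars_add: "mvars (p + q) \<subseteq> mvars p \<union> mvars q"
  unfolding mvars_def using keys_add by fastforce

lemma keys_add_nat: "Poly_Mapping.keys ((a::'v \<Rightarrow>\<^sub>0 nat) + b) = Poly_Mapping.keys a \<union> Poly_Mapping.keys b"
  by (auto simp: in_keys_iff lookup_add)

lemma mvars_mult: "mvars (p * q) \<subseteq> mvars p \<union> mvars q"
proof -
  have "Poly_Mapping.keys t \<subseteq> mvars p \<union> mvars q" if "t \<in> Poly_Mapping.keys (p * q)" for t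
  proof -
    have "t \<in> {a + b |a b. a \<in> Poly_Mapping.keys p \<and> b \<in> Poly_Mapping.keys q}"
      using keys_mult[of p q] that by (rule subsetD)
    then obtain a b where "a \<in> Poly_Mapping.keys p" "b \<in> Poly_Mapping.keys q" "t = a + b"
      by blast
    then show ?thesis using keys_add_nat[of a b] by (auto simp: mvars_def)
  qed
  then show ?thesis by (auto simp: mvars_def)
qed

lemma keys_uminus_pm: "Poly_Mapping.keys (- (p :: 'a \<Rightarrow>\<^sub>0 'b::ab_group_add)) = Poly_Mapping.keys p"
  by (auto simp: in_keys_iff lookup_uminus)

lemma mvars_uminus[simp]: "mvars (- p) = mvars p"
  by (simp add: mvars_def keys_uminus_pm)

lemma mvars_diff: "mvars (p - q) \<subseteq> mvars p \<union> mvars (q::('v,'k::comm_ring_1) mpoly)"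
  using mvars_add[of p "- q"] by simp

lemma mvars_single: "mvars (Poly_Mapping.single t c) \<subseteq> Poly_Mapping.keys t"
  by (auto simp: mvars_def)

lemma mvars_mconst[simp]: "mvars (mconst c) = {}"
  using mvars_single[of 0 c] by (auto simp: mconst_def)

lemma mvars_1[simp]: "mvars (1::('v,'k::comm_ring_1) mpoly) = {}"
  using mvars_mconst[of "1::'k"] by simp

lemma mvars_of_int[simp]: "mvars (of_int z :: ('v,'k::comm_ring_1) mpoly) = {}"
  using mvars_mconst[of "of_int z::'k"] by (simp add: mconst_of_int)

lemma mvars_mvar: "mvars (mvar v) \<subseteq> {v}"
  using mvars_single[of "Poly_Mapping.single v 1" 1] by (auto simp: mvar_def)

lemma mvars_sum: "mvars (sum f A) \<subseteq> (\<Union>x\<in>A. mvars (f x))"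
proof (induction A rule: infinite_finite_induct)
  case (insert x F)
  then show ?case using mvars_add[of "f x" "sum f F"] by auto
qed auto

lemma mvars_prod: "mvars (prod f A) \<subseteq> (\<Union>x\<in>A. mvars (f x :: ('v,'k::comm_ring_1) mpoly))"
proof (induction A rule: infinite_finite_induct)
  case (insert x F)
  then show ?case using mvars_mult[of "f x" "prod f F"] by auto
qed auto

lemma mvars_power: "mvars (p ^ k) \<subseteq> mvars (p :: ('v,'k::comm_ring_1) mpoly)"
proof (induction k)
  case (Suc k)
  then show ?case using mvars_mult[of p "p ^ k"] by auto
qed auto

lemma mvars_mult_subset: "mvars p \<subseteq> A \<Longrightarrow> mvars q \<subseteq> A \<Longrightarrow> mvars (p * q) \<subseteq> A"
  using mvars_mult[of p q] by blast
lemma mvars_add_subset: "mvars p \<subseteq> A \<Longrightarrow> mvars q \<subseteq> A \<Longrightarrow> mvars (p + q) \<subseteq> A"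
  using mvars_add[of p q] by blast
lemma mvars_diff_subset: "mvars (p::('v,'k::comm_ring_1) mpoly) \<subseteq> A \<Longrightarrow> mvars q \<subseteq> A \<Longrightarrow> mvars (p - q) \<subseteq> A"
  using mvars_diff[of p q] by blast
lemma mvars_sum_subset: "(\<And>x. x \<in> X \<Longrightarrow> mvars (f x) \<subseteq> A) \<Longrightarrow> mvars (sum f X) \<subseteq> A"
  using mvars_sum[of f X] by blast
lemma mvars_prod_subset: "(\<And>x. x \<in> X \<Longrightarrow> mvars (f x :: ('v,'k::comm_ring_1) mpoly) \<subseteq> A) \<Longrightarrow> mvars (prod f X) \<subseteq> A"
  using mvars_prod[of f X] by blast

lemma mvars_msubst: "mvars (msubst \<sigma> p) \<subseteq> (\<Union>v\<in>mvars p. mvars (\<sigma> v))"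
  unfolding msubst_def
proof (rule mvars_sum_subset)
  fix t assume t: "t \<in> Poly_Mapping.keys p"
  show "mvars (mconst (Poly_Mapping.lookup p t) * (\<Prod>v\<in>Poly_Mapping.keys t. \<sigma> v ^ Poly_Mapping.lookup t v))
     \<subseteq> (\<Union>v\<in>mvars p. mvars (\<sigma> v))"
  proof (rule mvars_mult_subset)
    show "mvars (\<Prod>v\<in>Poly_Mapping.keys t. \<sigma> v ^ Poly_Mapping.lookup t v) \<subseteq> (\<Union>v\<in>mvars p. mvars (\<sigma> v))"
    proof (rule mvars_prod_subset)
      fix v assume "v \<in> Poly_Mapping.keys t"
      then have "v \<in> mvars p" using keys_subset_mvars[OF t] by blast
      then show "mvars (\<sigma> v ^ Poly_Mapping.lookup t v) \<subseteq> (\<Union>v\<in>mvars p. mvars (\<sigma> v))"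
        using mvars_power[of "\<sigma> v" "Poly_Mapping.lookup t v"] by blast
    qed
  qed simp
qed

lemma mvars_ldet: "mvars (ldet k A) \<subseteq> (\<Union>i<k. \<Union>j<k. mvars (A i j))"
  unfolding ldet_def
proof (rule mvars_sum_subset, rule mvars_mult_subset)
  fix \<pi> assume "\<pi> \<in> {\<pi>. \<pi> permutes {0..<k}}"
  then have p: "\<pi> permutes {0..<k}" by simp
  show "mvars (\<Prod>i<k. A i (\<pi> i)) \<subseteq> (\<Union>i<k. \<Union>j<k. mvars (A i j))"
  proof (rule mvars_prod_subset)
    fix i assume "i \<in> {..<k}"
    then have "\<pi> i < k" using p permutes_in_image by fastforce
    then show "mvars (A i (\<pi> i)) \<subseteq> (\<Union>i<k. \<Union>j<k. mvars (A i j))" using \<open>i \<in> {..<k}\<close> by blast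
  qed
qed simp

lemma ideal_zero: "0 \<in> ideal_gen_in R G"
  unfolding ideal_gen_in_def by (rule CollectI, rule exI[of _ "{}"]) auto

lemma ideal_add:
  assumes R0: "0 \<in> R" and Radd: "\<And>a b. a \<in> R \<Longrightarrow> b \<in> R \<Longrightarrow> a + b \<in> R"
    and x: "x \<in> ideal_gen_in R G" and y: "y \<in> ideal_gen_in R G"
  shows "x + y \<in> ideal_gen_in R G"
proof -
  obtain S1 c1 where 1: "finite S1" "S1 \<subseteq> G" "\<forall>g\<in>S1. c1 g \<in> R" "x = (\<Sum>g\<in>S1. c1 g * g)"
    using x unfolding ideal_gen_in_def by blast
  obtain S2 c2 where 2: "finite S2" "S2 \<subseteq> G" "\<forall>g\<in>S2. c2 g \<in> R" "y = (\<Sum>g\<in>S2. c2 g * g)"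
    using y unfolding ideal_gen_in_def by blast
  define c where "c g = (if g \<in> S1 then c1 g else 0) + (if g \<in> S2 then c2 g else 0)" for g
  have s1: "(\<Sum>g\<in>S1 \<union> S2. (if g \<in> S1 then c1 g else 0) * g) = (\<Sum>g\<in>S1. c1 g * g)"
    by (rule sum.mono_neutral_cong_right) (use 1 2 in auto)
  have s2: "(\<Sum>g\<in>S1 \<union> S2. (if g \<in> S2 then c2 g else 0) * g) = (\<Sum>g\<in>S2. c2 g * g)"
    by (rule sum.mono_neutral_cong_right) (use 1 2 in auto)
  have e: "x + y = (\<Sum>g\<in>S1 \<union> S2. c g * g)"
    unfolding c_def distrib_right sum.distrib s1 s2 1(4) 2(4) ..
  have cR: "\<forall>g\<in>S1 \<union> S2. c g \<in> R"
  proof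
    fix g
    have a: "(if g \<in> S1 then c1 g else 0) \<in> R" using 1(3) R0 by simp
    have b: "(if g \<in> S2 then c2 g else 0) \<in> R" using 2(3) R0 by simp
    show "c g \<in> R" unfolding c_def by (rule Radd[OF a b])
  qed
  show ?thesis unfolding ideal_gen_in_def
    by (rule CollectI, rule exI[of _ "S1 \<union> S2"], rule exI[of _ c]) (use 1 2 e cR in auto)
qed

lemma ideal_gen:
  assumes "g \<in> G" "c \<in> R"
  shows "c * g \<in> ideal_gen_in R G"
  unfolding ideal_gen_in_def
  by (rule CollectI, rule exI[of _ "{g}"], rule exI[of _ "\<lambda>_. c"]) (use assms in auto)

lemma ideal_mult:
  assumes Rmult: "\<And>a b. a \<in> R \<Longrightarrow> b \<in> R \<Longrightarrow> a * b \<in> R"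
    and r: "r \<in> R" and x: "x \<in> ideal_gen_in R G"
  shows "r * x \<in> ideal_gen_in R G"
proof -
  obtain S c where 1: "finite S" "S \<subseteq> G" "\<forall>g\<in>S. c g \<in> R" "x = (\<Sum>g\<in>S. c g * g)"
    using x unfolding ideal_gen_in_def by blast
  have "r * x = (\<Sum>g\<in>S. (r * c g) * g)"
    unfolding 1 sum_distrib_left by (simp add: mult.assoc)
  moreover have "\<forall>g\<in>S. r * c g \<in> R" using 1 r Rmult by auto
  ultimately show ?thesis unfolding ideal_gen_in_def
    by (intro CollectI exI[of _ S] exI[of _ "\<lambda>g. r * c g"]) (use 1 in auto)
qed

lemma polys_in_0: "0 \<in> polys_in TYPE('k::comm_ring_1) L"
  by (simp add: polys_in_def)
lemma polys_in_add: "a \<in> polys_in TYPE('k::comm_ring_1) L \<Longrightarrow> b \<in> polys_in TYPE('k) L \<Longrightarrow> a + b \<in> polys_in TYPE('k) L"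
  by (simp add: polys_in_def mvars_add_subset)
lemma polys_in_mult: "a \<in> polys_in TYPE('k::comm_ring_1) L \<Longrightarrow> b \<in> polys_in TYPE('k) L \<Longrightarrow> a * b \<in> polys_in TYPE('k) L"
  by (simp add: polys_in_def mvars_mult_subset)

abbreviation JJ :: "'k::comm_ring_1 itself \<Rightarrow> nat \<Rightarrow> nat \<Rightarrow> nat \<Rightarrow> (mlab, 'k) mpoly set" where
  "JJ K n l m \<equiv> ideal_gen_in (polys_in K (M_labels n l m))
             (relations K n (low_labels n l) \<union> relations K n (lft_labels n m))"

lemma JJ_zero: "0 \<in> JJ TYPE('k::comm_ring_1) n l m"
  by (rule ideal_zero)

lemma JJ_add: "x \<in> JJ TYPE('k::comm_ring_1) n l m \<Longrightarrow> y \<in> JJ TYPE('k) n l m \<Longrightarrow> x + y \<in> JJ TYPE('k) n l m"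
  by (rule ideal_add) (auto intro: polys_in_0 polys_in_add)

lemma JJ_mult: "r \<in> polys_in TYPE('k::comm_ring_1) (M_labels n l m) \<Longrightarrow> x \<in> JJ TYPE('k) n l m \<Longrightarrow> r * x \<in> JJ TYPE('k) n l m"
  by (rule ideal_mult) (auto intro: polys_in_mult)

lemma JJ_sum: "(\<And>i. i \<in> I \<Longrightarrow> f i \<in> JJ TYPE('k::comm_ring_1) n l m) \<Longrightarrow> sum f I \<in> JJ TYPE('k) n l m"
  by (induction I rule: infinite_finite_induct) (auto intro: JJ_zero JJ_add)


lemma mult_expand:
  "p * q = (\<Sum>u\<in>Poly_Mapping.keys p. \<Sum>v\<in>Poly_Mapping.keys q.
      Poly_Mapping.single (u + v) (Poly_Mapping.lookup p u * Poly_Mapping.lookup q v))"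
proof -
  have "p * q = (\<Sum>u\<in>Poly_Mapping.keys p. Poly_Mapping.single u (Poly_Mapping.lookup p u))
       * (\<Sum>v\<in>Poly_Mapping.keys q. Poly_Mapping.single v (Poly_Mapping.lookup q v))"
    by (simp only: pm_expand[symmetric])
  also have "\<dots> = (\<Sum>u\<in>Poly_Mapping.keys p. \<Sum>v\<in>Poly_Mapping.keys q.
      Poly_Mapping.single (u + v) (Poly_Mapping.lookup p u * Poly_Mapping.lookup q v))"
    unfolding sum_distrib_right unfolding sum_distrib_left mult_single ..
  finally show ?thesis .
qed

lemma lookup_mconst_mult: "Poly_Mapping.lookup (mconst c * p) s = c * Poly_Mapping.lookup p s"
proof -
  have "mconst c * p = (\<Sum>v\<in>Poly_Mapping.keys p. Poly_Mapping.single v (c * Poly_Mapping.lookup p v))"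
    unfolding mconst_def by (subst (1) pm_expand[of p]) (simp add: sum_distrib_left mult_single)
  then show ?thesis
    by (simp add: lookup_sum lookup_single when_def sum_distrib_left in_keys_iff)
qed

lemma split_monomial_eq:
  fixes u v s \<mu> :: "'v \<Rightarrow>\<^sub>0 nat"
  assumes "A \<inter> B = {}" "Poly_Mapping.keys u \<subseteq> A" "Poly_Mapping.keys v \<subseteq> B"
    "Poly_Mapping.keys s \<inter> B = {}" "Poly_Mapping.keys \<mu> \<subseteq> B"
  shows "u + v = s + \<mu> \<longleftrightarrow> u = s \<and> v = \<mu>"
proof
  assume e: "u + v = s + \<mu>"
  have *: "Poly_Mapping.lookup u x + Poly_Mapping.lookup v x = Poly_Mapping.lookup s x + Poly_Mapping.lookup \<mu> x" for x
    using arg_cong[OF e, of "\<lambda>t. Poly_Mapping.lookup t x"] by (simp add: lookup_add)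
  have "Poly_Mapping.lookup u x = Poly_Mapping.lookup s x \<and> Poly_Mapping.lookup v x = Poly_Mapping.lookup \<mu> x" for x
  proof (cases "x \<in> B")
    case True
    then have "x \<notin> Poly_Mapping.keys u" "x \<notin> Poly_Mapping.keys s" using assms by auto
    then show ?thesis using *[of x] by (simp add: in_keys_iff)
  next
    case False
    then have "x \<notin> Poly_Mapping.keys v" "x \<notin> Poly_Mapping.keys \<mu>" using assms by auto
    then show ?thesis using *[of x] by (simp add: in_keys_iff)
  qed
  then show "u = s \<and> v = \<mu>" by (auto intro: poly_mapping_eqI)
qed simp

lemma double_delta:
  fixes f :: "'a \<Rightarrow> 'b \<Rightarrow> 'c::comm_monoid_add"
  assumes "finite K1" "finite K2"
  shows "(\<Sum>u\<in>K1. \<Sum>v\<in>K2. if u = s \<and> v = \<mu> then f u v else 0) = (if s \<in> K1 \<and> \<mu> \<in> K2 then f s \<mu> else 0)"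
proof -
  have "(\<Sum>v\<in>K2. if u = s \<and> v = \<mu> then f u v else 0) = (if u = s then (if \<mu> \<in> K2 then f s \<mu> else 0) else 0)" for u
    by (cases "u = s") (simp_all add: sum.delta' assms)
  then have "(\<Sum>u\<in>K1. \<Sum>v\<in>K2. if u = s \<and> v = \<mu> then f u v else 0) = (\<Sum>u\<in>K1. if u = s then (if \<mu> \<in> K2 then f s \<mu> else 0) else 0)"
    by simp
  also have "\<dots> = (if s \<in> K1 \<and> \<mu> \<in> K2 then f s \<mu> else 0)"
    by (simp add: sum.delta' assms)
  finally show ?thesis .
qed

lemma lookup_split_product:
  fixes a b :: "('v, 'k::comm_ring_1) mpoly"
  assumes "A \<inter> B = {}" "mvars a \<subseteq> A" "mvars b \<subseteq> B"
    "Poly_Mapping.keys s \<inter> B = {}" "Poly_Mapping.keys \<mu> \<subseteq> B"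
  shows "Poly_Mapping.lookup (a * b) (s + \<mu>) = Poly_Mapping.lookup a s * Poly_Mapping.lookup b \<mu>"
proof -
  have eq: "u + v = s + \<mu> \<longleftrightarrow> u = s \<and> v = \<mu>" if "u \<in> Poly_Mapping.keys a" "v \<in> Poly_Mapping.keys b" for u v
    by (rule split_monomial_eq[OF assms(1) _ _ assms(4,5)])
       (use that assms(2,3) keys_subset_mvars in blast)+
  have "Poly_Mapping.lookup (a * b) (s + \<mu>) = (\<Sum>u\<in>Poly_Mapping.keys a. \<Sum>v\<in>Poly_Mapping.keys b.
      (if u = s \<and> v = \<mu> then Poly_Mapping.lookup a u * Poly_Mapping.lookup b v else 0))"
    unfolding mult_expand[of a b] lookup_sum lookup_single
    by (intro sum.cong refl) (auto simp: when_def eq)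
  also have "\<dots> = Poly_Mapping.lookup a s * Poly_Mapping.lookup b \<mu>"
    unfolding double_delta[OF finite_keys finite_keys] by (simp add: in_keys_iff)
  finally show ?thesis .
qed

lemma coeff_extract:
  fixes a b :: "'i \<Rightarrow> ('v, 'k::comm_ring_1) mpoly"
  assumes fin: "finite I" and AB: "A \<inter> B = {}"
    and aA: "\<And>i. i \<in> I \<Longrightarrow> mvars (a i) \<subseteq> A" and bB: "\<And>i. i \<in> I \<Longrightarrow> mvars (b i) \<subseteq> B"
    and z: "(\<Sum>i\<in>I. a i * b i) = 0" and \<mu>: "Poly_Mapping.keys \<mu> \<subseteq> B"
  shows "(\<Sum>i\<in>I. mconst (Poly_Mapping.lookup (b i) \<mu>) * a i) = 0"
proof (rule poly_mapping_eqI)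
  fix s
  show "Poly_Mapping.lookup (\<Sum>i\<in>I. mconst (Poly_Mapping.lookup (b i) \<mu>) * a i) s = Poly_Mapping.lookup 0 s"
  proof (cases "Poly_Mapping.keys s \<inter> B = {}")
    case True
    have "Poly_Mapping.lookup (\<Sum>i\<in>I. mconst (Poly_Mapping.lookup (b i) \<mu>) * a i) s
        = (\<Sum>i\<in>I. Poly_Mapping.lookup (a i * b i) (s + \<mu>))"
      unfolding lookup_sum lookup_mconst_mult
      by (intro sum.cong refl) (simp add: lookup_split_product[OF AB aA bB True \<mu>] mult.commute)
    also have "\<dots> = Poly_Mapping.lookup (\<Sum>i\<in>I. a i * b i) (s + \<mu>)"
      by (simp add: lookup_sum)
    finally show ?thesis using z by simp
  next
    case False
    have "Poly_Mapping.lookup (a i) s = 0" if "i \<in> I" for i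
    proof -
      have "s \<notin> Poly_Mapping.keys (a i)"
        using False keys_subset_mvars[of s "a i"] aA[OF that] AB by blast
      then show ?thesis by (simp add: in_keys_iff)
    qed
    then show ?thesis unfolding lookup_sum lookup_mconst_mult by simp
  qed
qed

lemma mpoly_eq_0_if_lookups:
  assumes "\<And>\<mu>. Poly_Mapping.keys \<mu> \<subseteq> B \<Longrightarrow> Poly_Mapping.lookup p \<mu> = 0" "mvars p \<subseteq> B"
  shows "p = 0"
proof (rule poly_mapping_eqI)
  fix \<mu>
  show "Poly_Mapping.lookup p \<mu> = Poly_Mapping.lookup 0 \<mu>"
  proof (cases "\<mu> \<in> Poly_Mapping.keys p")
    case True
    then show ?thesis using assms keys_subset_mvars[OF True] by auto
  qed (simp add: in_keys_iff)
qed

definition restr :: "'v set \<Rightarrow> ('v \<Rightarrow>\<^sub>0 nat) \<Rightarrow> ('v \<Rightarrow>\<^sub>0 nat)" where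
  "restr A t = Abs_poly_mapping (\<lambda>x. if x \<in> A then Poly_Mapping.lookup t x else 0)"

lemma lookup_restr: "Poly_Mapping.lookup (restr A t) x = (if x \<in> A then Poly_Mapping.lookup t x else 0)"
proof -
  have "finite {x. (if x \<in> A then Poly_Mapping.lookup t x else 0) \<noteq> 0}"
  proof (rule finite_subset[of _ "Poly_Mapping.keys t"])
    show "{x. (if x \<in> A then Poly_Mapping.lookup t x else 0) \<noteq> 0} \<subseteq> Poly_Mapping.keys t"
    proof
      fix x assume "x \<in> {x. (if x \<in> A then Poly_Mapping.lookup t x else 0) \<noteq> 0}"
      then have "Poly_Mapping.lookup t x \<noteq> 0" by (cases "x \<in> A") auto
      then show "x \<in> Poly_Mapping.keys t" by (simp add: in_keys_iff)
    qed
  qed simp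
  then show ?thesis unfolding restr_def by simp
qed

lemma keys_restr: "Poly_Mapping.keys (restr A t) = Poly_Mapping.keys t \<inter> A"
proof -
  have "x \<in> Poly_Mapping.keys (restr A t) \<longleftrightarrow> x \<in> Poly_Mapping.keys t \<inter> A" for x
    by (cases "x \<in> A") (simp_all add: in_keys_iff lookup_restr)
  then show ?thesis by blast
qed

lemma restr_split: "restr A t + restr (- A) t = t"
  by (rule poly_mapping_eqI) (simp add: lookup_add lookup_restr)


section \<open>The tensor lemma\<close>

lemma PI_add: "x \<in> ideal_gen_in (polys_in TYPE('k::comm_ring_1) M) G \<Longrightarrow> y \<in> ideal_gen_in (polys_in TYPE('k) M) G
   \<Longrightarrow> x + y \<in> ideal_gen_in (polys_in TYPE('k) M) G"
  by (rule ideal_add) (auto intro: polys_in_0 polys_in_add)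

lemma PI_sum: "(\<And>i. i \<in> I \<Longrightarrow> f i \<in> ideal_gen_in (polys_in TYPE('k::comm_ring_1) M) G)
   \<Longrightarrow> sum f I \<in> ideal_gen_in (polys_in TYPE('k) M) G"
  by (induction I rule: infinite_finite_induct) (auto intro: ideal_zero PI_add)

lemma PI_mult: "r \<in> polys_in TYPE('k::comm_ring_1) M \<Longrightarrow> x \<in> ideal_gen_in (polys_in TYPE('k) M) G
   \<Longrightarrow> r * x \<in> ideal_gen_in (polys_in TYPE('k) M) G"
  by (rule ideal_mult) (auto intro: polys_in_mult)

lemma mvars_gen_msubst:
  assumes "mvars p \<subseteq> LA" "\<And>L. L \<in> LA \<Longrightarrow> mvars (gen_poly n L :: (wvar,'k::comm_ring_1) mpoly) \<subseteq> VA"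
  shows "mvars (msubst (gen_poly n) p :: (wvar,'k) mpoly) \<subseteq> VA"
  using mvars_msubst[of "gen_poly n" p] assms by blast

lemma tensor_ind:
  fixes f h :: "'i \<Rightarrow> (mlab, 'k::field) mpoly"
  assumes LM: "LA \<subseteq> M" "LB \<subseteq> M" and VAB: "VA \<inter> VB = {}"
    and gA: "\<And>L. L \<in> LA \<Longrightarrow> mvars (gen_poly n L :: (wvar,'k) mpoly) \<subseteq> VA"
    and gB: "\<And>L. L \<in> LB \<Longrightarrow> mvars (gen_poly n L :: (wvar,'k) mpoly) \<subseteq> VB"
  shows "finite I \<Longrightarrow> (\<And>i. i \<in> I \<Longrightarrow> mvars (f i) \<subseteq> LA) \<Longrightarrow> (\<And>i. i \<in> I \<Longrightarrow> mvars (h i) \<subseteq> LB)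
    \<Longrightarrow> (\<Sum>i\<in>I. msubst (gen_poly n) (f i) * msubst (gen_poly n) (h i) :: (wvar,'k) mpoly) = 0
    \<Longrightarrow> (\<Sum>i\<in>I. f i * h i) \<in> ideal_gen_in (polys_in TYPE('k) M) (relations TYPE('k) n LA \<union> relations TYPE('k) n LB)"
proof (induction "card I" arbitrary: I h rule: less_induct)
  case less
  let ?\<phi> = "msubst (gen_poly n) :: (mlab,'k) mpoly \<Rightarrow> (wvar,'k) mpoly"
  let ?J = "ideal_gen_in (polys_in TYPE('k) M) (relations TYPE('k) n LA \<union> relations TYPE('k) n LB)"
  have fM: "f i \<in> polys_in TYPE('k) M" if "i \<in> I" for i
    using less.prems(2)[OF that] LM by (auto simp: polys_in_def)
  have hM: "h i \<in> polys_in TYPE('k) M" if "i \<in> I" for i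
    using less.prems(3)[OF that] LM by (auto simp: polys_in_def)
  have fV: "mvars (?\<phi> (f i)) \<subseteq> VA" if "i \<in> I" for i
    by (rule mvars_gen_msubst[OF less.prems(2)[OF that] gA])
  have hV: "mvars (?\<phi> (h i)) \<subseteq> VB" if "i \<in> I" for i
    by (rule mvars_gen_msubst[OF less.prems(3)[OF that] gB])
  show ?case
  proof (cases "\<forall>c. (\<Sum>i\<in>I. mconst (c i) * ?\<phi> (f i)) = 0 \<longrightarrow> (\<forall>i\<in>I. c i = 0)")
    case True
    have "f i * h i \<in> ?J" if i: "i \<in> I" for i
    proof -
      have "?\<phi> (h i) = 0"
      proof (rule mpoly_eq_0_if_lookups[OF _ hV[OF i]])
        fix \<mu> :: "wvar \<Rightarrow>\<^sub>0 nat" assume \<mu>: "Poly_Mapping.keys \<mu> \<subseteq> VB"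
        have "(\<Sum>i\<in>I. mconst (Poly_Mapping.lookup (?\<phi> (h i)) \<mu>) * ?\<phi> (f i)) = 0"
          by (rule coeff_extract[OF less.prems(1) VAB fV hV less.prems(4) \<mu>])
        then show "Poly_Mapping.lookup (?\<phi> (h i)) \<mu> = 0"
          using spec[OF True, of "\<lambda>j. Poly_Mapping.lookup (?\<phi> (h j)) \<mu>"] i by blast
      qed
      then have "h i \<in> relations TYPE('k) n LB"
        using less.prems(3)[OF i] by (simp add: relations_def)
      then have "f i * h i \<in> ?J"
        by (intro ideal_gen[OF _ fM[OF i]]) blast
      then show ?thesis .
    qed
    then show ?thesis by (rule PI_sum)
  next
    case False
    then obtain c i0 where i0: "i0 \<in> I" "c i0 \<noteq> 0" and cz: "(\<Sum>i\<in>I. mconst (c i) * ?\<phi> (f i)) = 0"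
      by blast
    define d where "d i = c i / c i0" for i
    have d0: "d i0 = 1" using i0 by (simp add: d_def)
    define g where "g = (\<Sum>i\<in>I. mconst (d i) * f i)"
    have "?\<phi> g = (\<Sum>i\<in>I. mconst (inverse (c i0)) * (mconst (c i) * ?\<phi> (f i)))"
      unfolding g_def msubst_sum msubst_mult msubst_mconst d_def
    proof (intro sum.cong refl)
      fix x
      have cdiv: "mconst (c x / c i0) = mconst (inverse (c i0)) * mconst (c x)"
        by (simp add: mconst_mult[symmetric] divide_inverse mult.commute)
      show "mconst (c x / c i0) * ?\<phi> (f x) = mconst (inverse (c i0)) * (mconst (c x) * ?\<phi> (f x))"
        unfolding cdiv by (simp add: mult.assoc)
    qed
    also have "\<dots> = 0"
      unfolding sum_distrib_left[symmetric] cz by simp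
    finally have \<phi>g: "?\<phi> g = 0" .
    have "mvars g \<subseteq> LA"
      unfolding g_def by (intro mvars_sum_subset mvars_mult_subset) (use less.prems(2) in auto)
    then have "g \<in> relations TYPE('k) n LA" using \<phi>g by (simp add: relations_def)
    then have hg: "h i0 * g \<in> ?J"
      by (intro ideal_gen[OF _ hM[OF i0(1)]]) blast
    define I' where "I' = I - {i0}"
    define h' where "h' i = h i - mconst (d i) * h i0" for i
    have fin': "finite I'" using less.prems(1) by (simp add: I'_def)
    have card': "card I' < card I"
      using less.prems(1) i0 unfolding I'_def by (meson card_Diff1_less)
    have sumI: "(\<Sum>i\<in>I. F i) = F i0 + (\<Sum>i\<in>I'. F i)" for F :: "'i \<Rightarrow> 'z::comm_monoid_add"
      unfolding I'_def using less.prems(1) i0(1) by (simp add: sum.remove)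
    have e1: "h i0 * g = f i0 * h i0 + (\<Sum>i\<in>I'. f i * (mconst (d i) * h i0))"
      unfolding g_def sum_distrib_left sumI[of "\<lambda>i. h i0 * (mconst (d i) * f i)"] d0
      by (simp add: mult_ac)
    have e2: "(\<Sum>i\<in>I'. f i * h' i) = (\<Sum>i\<in>I'. f i * h i) - (\<Sum>i\<in>I'. f i * (mconst (d i) * h i0))"
      unfolding h'_def right_diff_distrib sum_subtractf ..
    have split: "(\<Sum>i\<in>I. f i * h i) = h i0 * g + (\<Sum>i\<in>I'. f i * h' i)"
      unfolding e1 e2 sumI[of "\<lambda>i. f i * h i"] by (simp add: algebra_simps)
    have "?\<phi> g = ?\<phi> (f i0) + (\<Sum>i\<in>I'. mconst (d i) * ?\<phi> (f i))"
      unfolding g_def msubst_sum msubst_mult msubst_mconst sumI[of "\<lambda>i. mconst (d i) * ?\<phi> (f i)"] d0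
      by simp
    then have "?\<phi> (f i0) + (\<Sum>i\<in>I'. mconst (d i) * ?\<phi> (f i)) = 0"
      using \<phi>g by simp
    then have s1: "(\<Sum>i\<in>I'. mconst (d i) * ?\<phi> (f i)) = - ?\<phi> (f i0)"
      by (simp only: add_eq_0_iff)
    have "(\<Sum>i\<in>I'. ?\<phi> (f i) * ?\<phi> (h' i)) = (\<Sum>i\<in>I'. ?\<phi> (f i) * ?\<phi> (h i)) - ?\<phi> (h i0) * (\<Sum>i\<in>I'. mconst (d i) * ?\<phi> (f i))"
      unfolding h'_def msubst_diff msubst_mult msubst_mconst right_diff_distrib sum_subtractf sum_distrib_left
      by (simp add: mult_ac)
    also have "\<dots> = (\<Sum>i\<in>I. ?\<phi> (f i) * ?\<phi> (h i))"
      unfolding s1 sumI[of "\<lambda>i. ?\<phi> (f i) * ?\<phi> (h i)"] by (simp add: algebra_simps)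
    also have "\<dots> = 0" by (rule less.prems(4))
    finally have z': "(\<Sum>i\<in>I'. ?\<phi> (f i) * ?\<phi> (h' i)) = 0" .
    have h'B: "mvars (h' i) \<subseteq> LB" if "i \<in> I'" for i
      unfolding h'_def using that i0(1)
      by (intro mvars_diff_subset mvars_mult_subset) (use less.prems(3) in \<open>auto simp: I'_def\<close>)
    have "(\<Sum>i\<in>I'. f i * h' i) \<in> ?J"
      by (rule less.hyps[OF _ fin' _ h'B z']) (use card' less.prems(2) in \<open>auto simp: I'_def\<close>)
    then show ?thesis unfolding split by (rule PI_add[OF hg])
  qed
qed


lemma q_decomp:
  fixes q :: "('v, 'k::comm_ring_1) mpoly"
  shows "q = (\<Sum>t\<in>Poly_Mapping.keys q. Poly_Mapping.single (restr A t) 1 * Poly_Mapping.single (restr (- A) t) (Poly_Mapping.lookup q t))"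
  unfolding mult_single restr_split mult.left_neutral by (rule pm_expand)

lemma tensor:
  fixes q :: "(mlab, 'k::field) mpoly"
  assumes LM: "LA \<subseteq> M" "LB \<subseteq> M" and VAB: "VA \<inter> VB = {}"
    and gA: "\<And>L. L \<in> LA \<Longrightarrow> mvars (gen_poly n L :: (wvar,'k) mpoly) \<subseteq> VA"
    and gB: "\<And>L. L \<in> LB \<Longrightarrow> mvars (gen_poly n L :: (wvar,'k) mpoly) \<subseteq> VB"
    and q: "mvars q \<subseteq> LA \<union> LB" "msubst (gen_poly n) q = (0 :: (wvar,'k) mpoly)"
  shows "q \<in> ideal_gen_in (polys_in TYPE('k) M) (relations TYPE('k) n LA \<union> relations TYPE('k) n LB)"
proof -
  define f where "f t = (Poly_Mapping.single (restr LA t) 1 :: (mlab, 'k) mpoly)" for t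
  define h where "h t = (Poly_Mapping.single (restr (- LA) t) (Poly_Mapping.lookup q t) :: (mlab, 'k) mpoly)" for t
  have qe: "q = (\<Sum>t\<in>Poly_Mapping.keys q. f t * h t)"
    unfolding f_def h_def by (rule q_decomp)
  show ?thesis
  proof (subst qe, rule tensor_ind[OF LM VAB gA gB])
    fix t assume "t \<in> Poly_Mapping.keys q"
    show "mvars (f t) \<subseteq> LA" unfolding f_def using mvars_single keys_restr by fastforce
    have "Poly_Mapping.keys t \<subseteq> LA \<union> LB" using keys_subset_mvars[OF \<open>t \<in> _\<close>] q(1) by blast
    then show "mvars (h t) \<subseteq> LB" unfolding h_def using mvars_single[of "restr (- LA) t"] keys_restr[of "- LA" t] by blast
  next
    show "(\<Sum>t\<in>Poly_Mapping.keys q. msubst (gen_poly n) (f t) * msubst (gen_poly n) (h t) :: (wvar,'k) mpoly) = 0"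
      using q(2) unfolding msubst_mult[symmetric] msubst_sum[symmetric] qe[symmetric] .
  qed auto
qed

fun wenc :: "wvar \<Rightarrow> nat" where
  "wenc (Xc i j) = 2 * prod_encode (i, j)"
| "wenc (Yc i j) = 2 * prod_encode (i, j) + 1"

lemma wenc_inj: "wenc x = wenc y \<Longrightarrow> x = y"
  by (cases x; cases y) (auto dest: inj_onD[OF inj_prod_encode, of "(a,b)" "(c,d)" for a b c d] simp: prod_encode_eq, presburger+)

instantiation wvar :: linorder
begin
definition less_eq_wvar :: "wvar \<Rightarrow> wvar \<Rightarrow> bool" where "less_eq_wvar x y = (wenc x \<le> wenc y)"
definition less_wvar :: "wvar \<Rightarrow> wvar \<Rightarrow> bool" where "less_wvar x y = (wenc x < wenc y)"
instance
  by standard (auto simp: less_eq_wvar_def less_wvar_def intro: wenc_inj)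
end



lemma ldet_det: "ldet k A = det (mat k k (\<lambda>(i,j). A i j))"
  unfolding ldet_def det_def by (auto simp: lessThan_atLeast0 intro!: sum.cong prod.cong)

lemma msubst_ldet: "msubst \<sigma> (ldet k A) = ldet k (\<lambda>i j. msubst \<sigma> (A i j))"
  unfolding ldet_def msubst_sum msubst_mult msubst_prod msubst_of_int ..

lemma ldet_one: "ldet k (\<lambda>i j. if i = j then 1 else 0) = (1 :: 'a::comm_ring_1)"
proof -
  have "mat k k (\<lambda>(i,j). if i = j then 1 else 0) = (1\<^sub>m k :: 'a mat)"
    by (rule eq_matI) auto
  then show ?thesis unfolding ldet_det by simp
qed

lemma col_cof:
  assumes A: "A \<in> carrier_mat n n" and ij: "i < n" "j < n"
  shows "(\<Sum>k<n. cofactor A k i * A $$ (k,j)) = (if i = j then det A else 0)"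
proof -
  have "(adj_mat A * A) $$ (i,j) = (det A \<cdot>\<^sub>m 1\<^sub>m n) $$ (i,j)" using adj_mat(3)[OF A] by simp
  moreover have "(adj_mat A * A) $$ (i,j) = (\<Sum>k<n. cofactor A k i * A $$ (k,j))"
    using A ij adj_mat(1)[OF A] by (simp add: scalar_prod_def adj_mat_def lessThan_atLeast0)
  moreover have "(det A \<cdot>\<^sub>m 1\<^sub>m n) $$ (i,j) = (if i = j then det A else 0)"
    using ij by simp
  ultimately show ?thesis by simp
qed

lemma row_cof:
  assumes A: "A \<in> carrier_mat n n" and ij: "i < n" "j < n"
  shows "(\<Sum>k<n. A $$ (i,k) * cofactor A j k) = (if i = j then det A else 0)"
proof -
  have "(A * adj_mat A) $$ (i,j) = (det A \<cdot>\<^sub>m 1\<^sub>m n) $$ (i,j)" using adj_mat(2)[OF A] by simp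
  moreover have "(A * adj_mat A) $$ (i,j) = (\<Sum>k<n. A $$ (i,k) * cofactor A j k)"
    using A ij adj_mat(1)[OF A] by (simp add: scalar_prod_def adj_mat_def lessThan_atLeast0)
  moreover have "(det A \<cdot>\<^sub>m 1\<^sub>m n) $$ (i,j) = (if i = j then det A else 0)"
    using ij by simp
  ultimately show ?thesis by simp
qed

lemma sorted_range_nth: "a < k \<Longrightarrow> sorted_list_of_set {0..<k} ! a = a"
  by simp

lemma sorted_remove_nth:
  assumes "i < k" "a < k - 1"
  shows "sorted_list_of_set ({0..<k} - {i}) ! a = insert_index i a"
proof -
  have "sorted_list_of_set ({0..<k} - {i}) = [0..<i] @ [Suc i..<k]"
    by (rule sorted_distinct_set_unique) (use assms in \<open>auto simp: sorted_append\<close>)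
  then show ?thesis using assms by (auto simp: nth_append insert_index_def)
qed

lemma card_remove_range: "i < k \<Longrightarrow> card ({0..<k} - {i}) = k - 1"
  by simp


definition YB :: "nat \<Rightarrow> (wvar, 'k::comm_ring_1) mpoly mat" where
  "YB b = mat b b (\<lambda>(r,c). Vsbar r c)"

definition XA :: "nat \<Rightarrow> nat \<Rightarrow> (wvar, 'k::comm_ring_1) mpoly mat" where
  "XA n a = mat a a (\<lambda>(r,c). Vbar (n - a + r) c)"

lemma YB_carrier: "YB b \<in> carrier_mat b b" by (simp add: YB_def)
lemma XA_carrier: "XA n a \<in> carrier_mat a a" by (simp add: XA_def)

lemma ldet_0: "ldet 0 A = 1"
proof -
  have "ldet 0 A = ldet 0 (\<lambda>i j. if i = j then 1 else 0)" by (simp add: ldet_def)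
  then show ?thesis by (simp add: ldet_one)
qed

lemma left_minor_range: "left_minor {0..<b} = det (YB b)"
  unfolding left_minor_def ldet_det YB_def by (intro arg_cong[where f=det] eq_matI) auto

lemma left_minor_remove:
  assumes "i < b"
  shows "left_minor ({0..<b} - {i}) = det (mat_delete (YB b) i (b - 1))"
  unfolding left_minor_def ldet_det card_remove_range[OF assms]
proof (intro arg_cong[where f=det] eq_matI)
  fix r c assume rc: "r < dim_row (mat_delete (YB b) i (b - 1))" "c < dim_col (mat_delete (YB b) i (b - 1))"
  then have r: "r < b - 1" and c: "c < b - 1" by (auto simp: YB_def)
  have "insert_index i r < b" using r assms by (auto simp: insert_index_def)
  then show "mat (b - 1) (b - 1) (\<lambda>(ia, j). Vsbar (sorted_list_of_set ({0..<b} - {i}) ! ia) j) $$ (r, c)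
      = mat_delete (YB b) i (b - 1) $$ (r, c)"
    using r c assms by (auto simp: mat_delete_def YB_def sorted_remove_nth insert_index_def)
qed (auto simp: YB_def)

lemma lower_minor_range: "lower_minor n {0..<a} = det (XA n a)"
  unfolding lower_minor_def ldet_det XA_def by (intro arg_cong[where f=det] eq_matI) auto

lemma lower_minor_remove:
  assumes "1 \<le> a" "a \<le> n" "j < a"
  shows "lower_minor n ({0..<a} - {j}) = det (mat_delete (XA n a) 0 j)"
  unfolding lower_minor_def ldet_det card_remove_range[OF assms(3)]
proof (intro arg_cong[where f=det] eq_matI)
  fix r c assume rc: "r < dim_row (mat_delete (XA n a) 0 j)" "c < dim_col (mat_delete (XA n a) 0 j)"
  then have r: "r < a - 1" and c: "c < a - 1" by (auto simp: XA_def)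
  have "insert_index j c < a" using c assms by (auto simp: insert_index_def)
  moreover have "n - (a - 1) + r = n - a + Suc r" using assms by simp
  ultimately show "mat (a - 1) (a - 1) (\<lambda>(i, ja). Vbar (n - (a - 1) + i) (sorted_list_of_set ({0..<a} - {j}) ! ja)) $$ (r, c)
      = mat_delete (XA n a) 0 j $$ (r, c)"
    using r c assms by (auto simp: mat_delete_def XA_def sorted_remove_nth insert_index_def)
qed (auto simp: XA_def)

lemma key_identity:
  assumes a: "1 \<le> a" "a \<le> n" and b: "b = n + 1 - a"
  shows "(\<Sum>i<b. \<Sum>j<a. cofactor (YB b) i (b - 1) * cofactor (XA n a) 0 j * (\<Sum>k<n. Vsbar i k * Vbar k j))
     = det (YB b) * (det (XA n a) :: (wvar, 'k::comm_ring_1) mpoly)"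
proof -
  define P where "P k = (\<Sum>i<b. cofactor (YB b) i (b - 1) * (Vsbar i k :: (wvar,'k) mpoly))" for k
  define Q where "Q k = (\<Sum>j<a. cofactor (XA n a) 0 j * (Vbar k j :: (wvar,'k) mpoly))" for k
  have "(\<Sum>i<b. \<Sum>j<a. cofactor (YB b) i (b - 1) * cofactor (XA n a) 0 j * (\<Sum>k<n. Vsbar i k * Vbar k j))
      = (\<Sum>i<b. \<Sum>j<a. \<Sum>k<n. (cofactor (YB b) i (b - 1) * Vsbar i k) * (cofactor (XA n a) 0 j * Vbar k j))"
    unfolding sum_distrib_left by (intro sum.cong refl) (simp add: mult_ac)
  also have "\<dots> = (\<Sum>k<n. \<Sum>i<b. \<Sum>j<a. (cofactor (YB b) i (b - 1) * Vsbar i k) * (cofactor (XA n a) 0 j * Vbar k j))"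
    by (subst sum.swap, subst (2) sum.swap) (rule refl)
  also have "\<dots> = (\<Sum>k<n. P k * Q k)"
    unfolding P_def Q_def sum_product ..
  also have "\<dots> = P (b - 1) * Q (b - 1) + (\<Sum>k\<in>{..<n} - {b - 1}. P k * Q k)"
    using a b by (subst sum.remove[of _ "b - 1"]) auto
  also have "(\<Sum>k\<in>{..<n} - {b - 1}. P k * Q k) = 0"
  proof (rule sum.neutral, rule ballI)
    fix k assume k: "k \<in> {..<n} - {b - 1}"
    show "P k * Q k = 0"
    proof (cases "k < b - 1")
      case True
      have "P k = (\<Sum>i<b. cofactor (YB b) i (b - 1) * YB b $$ (i, k))"
        unfolding P_def using True by (intro sum.cong refl) (simp add: YB_def)
      also have "\<dots> = (if b - 1 = k then det (YB b) else 0)"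
        by (rule col_cof[OF YB_carrier]) (use True a b in auto)
      also have "\<dots> = 0" using True by simp
      finally show ?thesis by simp
    next
      case False
      then have k': "n - a + (k - (n - a)) = k" "k - (n - a) < a" "k - (n - a) \<noteq> 0"
        using k a b by auto
      have "Q k = (\<Sum>j<a. XA n a $$ (k - (n - a), j) * cofactor (XA n a) 0 j)"
        unfolding Q_def using k' by (intro sum.cong refl) (simp add: XA_def mult.commute)
      also have "\<dots> = (if k - (n - a) = 0 then det (XA n a) else 0)"
        by (rule row_cof[OF XA_carrier]) (use k' a in auto)
      also have "\<dots> = 0" using k' by simp
      finally show ?thesis by simp
    qed
  qed
  also have "P (b - 1) = det (YB b)"
  proof -
    have "P (b - 1) = (\<Sum>i<b. cofactor (YB b) i (b - 1) * YB b $$ (i, b - 1))"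
      unfolding P_def using a b by (intro sum.cong refl) (simp add: YB_def)
    also have "\<dots> = (if b - 1 = b - 1 then det (YB b) else 0)"
      by (rule col_cof[OF YB_carrier]) (use a b in auto)
    finally show ?thesis by simp
  qed
  also have "Q (b - 1) = det (XA n a)"
  proof -
    have "Q (b - 1) = (\<Sum>j<a. XA n a $$ (0, j) * cofactor (XA n a) 0 j)"
      unfolding Q_def using a b by (intro sum.cong refl) (simp add: XA_def mult.commute)
    also have "\<dots> = (if 0 = (0::nat) then det (XA n a) else 0)"
      by (rule row_cof[OF XA_carrier]) (use a in auto)
    finally show ?thesis by simp
  qed
  finally show ?thesis by simp
qed


section \<open>The case l + m > n: an extra relation\<close>

definition lftv :: "nat set \<Rightarrow> (mlab, 'k::comm_ring_1) mpoly" where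
  "lftv S = (if S = {} then 1 else mvar (Lft S))"

definition lowv :: "nat set \<Rightarrow> (mlab, 'k::comm_ring_1) mpoly" where
  "lowv S = (if S = {} then 1 else mvar (Low S))"

lemma left_minor_empty: "left_minor {} = 1"
  by (simp add: left_minor_def ldet_0)

lemma lower_minor_empty: "lower_minor n {} = 1"
  by (simp add: lower_minor_def ldet_0)

lemma msubst_lftv: "(\<And>L. L \<noteq> Ent 0 0 \<Longrightarrow> \<sigma> L = gen_poly n L) \<Longrightarrow> msubst \<sigma> (lftv S) = left_minor S"
  by (simp add: lftv_def left_minor_empty gen_poly_def)

lemma msubst_lowv: "(\<And>L. L \<noteq> Ent 0 0 \<Longrightarrow> \<sigma> L = gen_poly n L) \<Longrightarrow> msubst \<sigma> (lowv S) = lower_minor n S"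
  by (simp add: lowv_def lower_minor_empty gen_poly_def)

lemma msubst_neg1_power[simp]: "msubst \<sigma> ((-1) ^ k) = (-1) ^ k"
  by (simp add: msubst_power msubst_uminus)

definition xrel :: "nat \<Rightarrow> nat \<Rightarrow> nat \<Rightarrow> (mlab, 'k::comm_ring_1) mpoly" where
  "xrel n a b = (\<Sum>i<b. \<Sum>j<a. ((-1) ^ (i + (b - 1)) * (-1) ^ (0 + j)) * mvar (Ent i j)
       * lftv ({0..<b} - {i}) * lowv ({0..<a} - {j})) - mvar (Lft {0..<b}) * mvar (Low {0..<a})"

lemma msubst_xrel:
  fixes \<sigma> :: "mlab \<Rightarrow> (wvar, 'k::comm_ring_1) mpoly"
  assumes a: "1 \<le> a" "a \<le> n" and b: "b = n + 1 - a"
    and \<sigma>: "\<And>L. L \<noteq> Ent 0 0 \<Longrightarrow> \<sigma> L = gen_poly n L"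
    and \<sigma>0: "\<sigma> (Ent 0 0) = gen_poly n (Ent 0 0) + e"
  shows "msubst \<sigma> (xrel n a b) = (-1) ^ (b - 1) * e * left_minor ({0..<b} - {0}) * lower_minor n ({0..<a} - {0})"
proof -
  define E where "E i j = (\<Sum>k<n. Vsbar i k * Vbar k j :: (wvar,'k) mpoly)" for i j
  have \<sigma>E: "\<sigma> (Ent i j) = E i j + (if i = 0 \<and> j = 0 then e else 0)" for i j
    using \<sigma>[of "Ent i j"] \<sigma>0 by (cases "i = 0 \<and> j = 0") (auto simp: gen_poly_def E_def)
  have W: "left_minor ({0..<b} - {i}) = det (mat_delete (YB b) i (b - 1))" if "i < b" for i
    by (rule left_minor_remove[OF that])
  have Z: "lower_minor n ({0..<a} - {j}) = det (mat_delete (XA n a) 0 j)" if "j < a" for j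
    by (rule lower_minor_remove[OF a that])
  have "msubst \<sigma> (xrel n a b) =
     (\<Sum>i<b. \<Sum>j<a. ((-1) ^ (i + (b - 1)) * (-1) ^ (0 + j)) * (E i j + (if i = 0 \<and> j = 0 then e else 0))
       * left_minor ({0..<b} - {i}) * lower_minor n ({0..<a} - {j})) - left_minor {0..<b} * lower_minor n {0..<a}"
  proof -
    have l1: "msubst \<sigma> (lftv S) = left_minor S" for S by (rule msubst_lftv[OF \<sigma>])
    have l2: "msubst \<sigma> (lowv S) = lower_minor n S" for S by (rule msubst_lowv[OF \<sigma>])
    have l3: "\<sigma> (Lft S) = left_minor S" for S using \<sigma>[of "Lft S"] by (simp add: gen_poly_def)
    have l4: "\<sigma> (Low S) = lower_minor n S" for S using \<sigma>[of "Low S"] by (simp add: gen_poly_def)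
    show ?thesis
      unfolding xrel_def msubst_diff msubst_sum msubst_mult msubst_mvar msubst_neg1_power \<sigma>E l1 l2 l3 l4 ..
  qed
  also have "\<dots> = (\<Sum>i<b. \<Sum>j<a. cofactor (YB b) i (b - 1) * cofactor (XA n a) 0 j * E i j)
     + (\<Sum>i<b. \<Sum>j<a. if i = 0 \<and> j = 0 then ((-1) ^ (i + (b - 1)) * (-1) ^ (0 + j)) * e
       * left_minor ({0..<b} - {i}) * lower_minor n ({0..<a} - {j}) else 0)
     - det (YB b) * det (XA n a)"
    unfolding left_minor_range lower_minor_range sum.distrib[symmetric]
    by (intro arg_cong2[where f=minus] refl sum.cong) (auto simp: W Z cofactor_def algebra_simps)
  also have "(\<Sum>i<b. \<Sum>j<a. cofactor (YB b) i (b - 1) * cofactor (XA n a) 0 j * E i j) = det (YB b) * det (XA n a)"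
    unfolding E_def by (rule key_identity[OF a b])
  also have "(\<Sum>i<b. \<Sum>j<a. if i = 0 \<and> j = 0 then ((-1) ^ (i + (b - 1)) * (-1) ^ (0 + j)) * e
       * left_minor ({0..<b} - {i}) * lower_minor n ({0..<a} - {j}) else 0)
     = (-1) ^ (b - 1) * e * left_minor ({0..<b} - {0}) * lower_minor n ({0..<a} - {0})"
    unfolding double_delta[OF finite_lessThan finite_lessThan] using a b by simp
  finally show ?thesis by simp
qed


lemma ldet_cong: "(\<And>i j. i < k \<Longrightarrow> j < k \<Longrightarrow> A i j = B i j) \<Longrightarrow> ldet k A = ldet k B"
  unfolding ldet_def
proof (intro sum.cong refl arg_cong2[where f=times] prod.cong)
  fix \<pi> i assume "\<pi> \<in> {\<pi>. \<pi> permutes {0..<k}}" "i \<in> {..<k}" "\<And>i j. i < k \<Longrightarrow> j < k \<Longrightarrow> A i j = B i j"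
  moreover then have "\<pi> i < k" using permutes_in_image by fastforce
  ultimately show "A i (\<pi> i) = B i (\<pi> i)" by auto
qed

definition evm :: "nat \<Rightarrow> nat \<Rightarrow> wvar \<Rightarrow> (wvar, 'k::comm_ring_1) mpoly" where
  "evm n a v = (case v of Xc i j \<Rightarrow> mconst (if i + a = n + j then 1 else 0)
                   | Yc i j \<Rightarrow> mconst (if i = Suc j then 1 else 0))"

lemma evm_left_minor:
  assumes "1 \<le> b"
  shows "msubst (evm n a) (left_minor ({0..<b} - {0})) = (1 :: (wvar, 'k::comm_ring_1) mpoly)"
proof -
  have b0: "0 < b" using assms by simp
  have "msubst (evm n a) (left_minor ({0..<b} - {0})) = ldet (b - 1) (\<lambda>i j. if i = j then 1 else (0 :: (wvar, 'k) mpoly))"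
    unfolding left_minor_def msubst_ldet card_remove_range[of 0 b, OF b0]
    by (rule ldet_cong) (use assms in \<open>auto simp: sorted_remove_nth insert_index_def Vsbar_def evm_def\<close>)
  then show ?thesis by (simp add: ldet_one)
qed

lemma evm_lower_minor:
  assumes "1 \<le> a" "a \<le> n"
  shows "msubst (evm n a) (lower_minor n ({0..<a} - {0})) = (1 :: (wvar, 'k::comm_ring_1) mpoly)"
proof -
  have a0: "0 < a" using assms by simp
  have "n - (a - 1) + a = n + 1" using assms by simp
  have "msubst (evm n a) (lower_minor n ({0..<a} - {0})) = ldet (a - 1) (\<lambda>i j. if i = j then 1 else (0 :: (wvar, 'k) mpoly))"
    unfolding lower_minor_def msubst_ldet card_remove_range[of 0 a, OF a0]
    by (rule ldet_cong) (use assms in \<open>auto simp: sorted_remove_nth insert_index_def Vbar_def evm_def\<close>)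
  then show ?thesis by (simp add: ldet_one)
qed

lemma JJ_kill:
  fixes \<sigma> :: "mlab \<Rightarrow> (wvar, 'k::comm_ring_1) mpoly"
  assumes \<sigma>: "\<And>L. L \<in> low_labels n l \<union> lft_labels n m \<Longrightarrow> \<sigma> L = gen_poly n L"
    and x: "x \<in> JJ TYPE('k) n l m"
  shows "msubst \<sigma> x = 0"
proof -
  obtain S c where S: "finite S" "S \<subseteq> relations TYPE('k) n (low_labels n l) \<union> relations TYPE('k) n (lft_labels n m)"
    "x = (\<Sum>g\<in>S. c g * g)"
    using x unfolding ideal_gen_in_def by blast
  have "msubst \<sigma> g = 0" if "g \<in> S" for g
  proof -
    have g: "mvars g \<subseteq> low_labels n l \<union> lft_labels n m" "msubst (gen_poly n) g = (0 :: (wvar,'k) mpoly)"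
      using S(2) that by (auto simp: relations_def)
    have "msubst \<sigma> g = msubst (gen_poly n) g"
      by (rule msubst_cong) (use g(1) \<sigma> in blast)
    then show ?thesis using g(2) by simp
  qed
  then show ?thesis unfolding S(3) msubst_sum msubst_mult by simp
qed

lemma xrel_mvars:
  assumes a: "a = min l n" "1 \<le> a" and b: "b = n + 1 - a" "b \<le> m"
  shows "mvars (xrel n a b :: (mlab, 'k::comm_ring_1) mpoly) \<subseteq> M_labels n l m"
proof -
  have ent: "mvars (mvar (Ent i j) :: (mlab, 'k) mpoly) \<subseteq> M_labels n l m" if "i < b" "j < a" for i j
    using mvars_mvar[of "Ent i j"] that a b by (auto simp: M_labels_def ent_labels_def)
  have lft: "mvars (lftv ({0..<b} - {i}) :: (mlab, 'k) mpoly) \<subseteq> M_labels n l m" if "i < b" for i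
  proof (cases "{0..<b} - {i} = {}")
    case False
    have "Lft ({0..<b} - {i}) \<in> lft_labels n m"
      unfolding lft_labels_def using False that a b
      by (auto simp: card_remove_range[OF that] intro!: exI[of _ "{0..<b} - {i}"])
    then show ?thesis using mvars_mvar[of "Lft ({0..<b} - {i})"] False by (auto simp: lftv_def M_labels_def)
  qed (simp add: lftv_def)
  have low: "mvars (lowv ({0..<a} - {j}) :: (mlab, 'k) mpoly) \<subseteq> M_labels n l m" if "j < a" for j
  proof (cases "{0..<a} - {j} = {}")
    case False
    have "Low ({0..<a} - {j}) \<in> low_labels n l"
      unfolding low_labels_def using False that a b
      by (auto simp: card_remove_range[OF that] intro!: exI[of _ "{0..<a} - {j}"])
    then show ?thesis using mvars_mvar[of "Low ({0..<a} - {j})"] False by (auto simp: lowv_def M_labels_def)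
  qed (simp add: lowv_def)
  have "Lft {0..<b} \<in> lft_labels n m" unfolding lft_labels_def using a b by auto
  then have lft0: "mvars (mvar (Lft {0..<b}) :: (mlab, 'k) mpoly) \<subseteq> M_labels n l m"
    using mvars_mvar[of "Lft {0..<b}"] by (auto simp: M_labels_def)
  have "Low {0..<a} \<in> low_labels n l" unfolding low_labels_def using a b by auto
  then have low0: "mvars (mvar (Low {0..<a}) :: (mlab, 'k) mpoly) \<subseteq> M_labels n l m"
    using mvars_mvar[of "Low {0..<a}"] by (auto simp: M_labels_def)
  have neg: "mvars ((-1) ^ k :: (mlab, 'k) mpoly) \<subseteq> M_labels n l m" for k
    using mvars_power[of "-1 :: (mlab, 'k) mpoly" k] by simp
  show ?thesis
    unfolding xrel_def
    by (intro mvars_diff_subset mvars_sum_subset mvars_mult_subset ent lft low lft0 low0 neg) auto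
qed

lemma only_if_part:
  assumes l: "0 < l" and m: "0 < m" and lmn: "n < l + m"
  shows "relations TYPE('k::field) n (M_labels n l m) \<noteq> JJ TYPE('k) n l m"
proof (cases "n = 0")
  case True
  define r where "r = (mvar (Ent 0 0) :: (mlab, 'k) mpoly)"
  have "r \<in> relations TYPE('k) n (M_labels n l m)"
    using mvars_mvar[of "Ent 0 0"] l m True
    by (auto simp: relations_def r_def gen_poly_def M_labels_def ent_labels_def)
  moreover have "r \<notin> JJ TYPE('k) n l m"
  proof
    assume "r \<in> JJ TYPE('k) n l m"
    then have "msubst (\<lambda>L. if L = Ent 0 0 then gen_poly n L + 1 else gen_poly n L) r = (0 :: (wvar, 'k) mpoly)"
      by (intro JJ_kill) (auto simp: low_labels_def lft_labels_def)
    then show False using True by (simp add: r_def gen_poly_def)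
  qed
  ultimately show ?thesis by blast
next
  case False
  define a where "a = min l n"
  define b where "b = n + 1 - a"
  have a1: "1 \<le> a" "a \<le> n" using False l by (auto simp: a_def)
  have b1: "1 \<le> b" "b \<le> m" using a1 lmn m by (auto simp: b_def a_def min_def)
  define r where "r = (xrel n a b :: (mlab, 'k) mpoly)"
  have "msubst (gen_poly n) r = (-1) ^ (b - 1) * 0 * left_minor ({0..<b} - {0}) * lower_minor n ({0..<a} - {0})"
    unfolding r_def by (rule msubst_xrel[OF a1 b_def]) auto
  then have "r \<in> relations TYPE('k) n (M_labels n l m)"
    using xrel_mvars[OF a_def a1(1) b_def b1(2)] by (simp add: relations_def r_def)
  moreover have "r \<notin> JJ TYPE('k) n l m"
  proof
    assume "r \<in> JJ TYPE('k) n l m"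
    then have z: "msubst (\<lambda>L. if L = Ent 0 0 then gen_poly n L + 1 else gen_poly n L) r = (0 :: (wvar, 'k) mpoly)"
      by (intro JJ_kill) (auto simp: low_labels_def lft_labels_def)
    have "msubst (\<lambda>L. if L = Ent 0 0 then gen_poly n L + 1 else gen_poly n L) r
       = (-1) ^ (b - 1) * 1 * left_minor ({0..<b} - {0}) * (lower_minor n ({0..<a} - {0}) :: (wvar, 'k) mpoly)"
      unfolding r_def by (rule msubst_xrel[OF a1 b_def]) auto
    then have "(-1) ^ (b - 1) * 1 * left_minor ({0..<b} - {0}) * (lower_minor n ({0..<a} - {0}) :: (wvar, 'k) mpoly) = 0"
      using z by (simp only:)
    then have "msubst (evm n a) ((-1) ^ (b - 1) * 1 * left_minor ({0..<b} - {0}) * (lower_minor n ({0..<a} - {0}) :: (wvar, 'k) mpoly)) = 0"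
      by (simp only: msubst_0)
    then have "((-1) ^ (b - 1) :: (wvar, 'k) mpoly) = 0"
      unfolding msubst_mult msubst_neg1_power evm_left_minor[OF b1(1)] evm_lower_minor[OF a1(1) a1(2)] by simp
    then show False by simp
  qed
  ultimately show ?thesis by blast
qed


section \<open>The case l + m \<le> n\<close>

lemma JJ_sub_relations:
  assumes "x \<in> JJ TYPE('k::comm_ring_1) n l m"
  shows "x \<in> relations TYPE('k) n (M_labels n l m)"
proof -
  obtain S c where S: "finite S" "S \<subseteq> relations TYPE('k) n (low_labels n l) \<union> relations TYPE('k) n (lft_labels n m)"
    "\<forall>g\<in>S. c g \<in> polys_in TYPE('k) (M_labels n l m)" "x = (\<Sum>g\<in>S. c g * g)"
    using assms unfolding ideal_gen_in_def by blast
  have "mvars x \<subseteq> M_labels n l m"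
    unfolding S(4)
  proof (intro mvars_sum_subset mvars_mult_subset)
    fix g assume g: "g \<in> S"
    show "mvars (c g) \<subseteq> M_labels n l m" using S(3) g by (auto simp: polys_in_def)
    show "mvars g \<subseteq> M_labels n l m" using S(2) g by (auto simp: relations_def M_labels_def)
  qed
  moreover have "msubst (gen_poly n) x = (0 :: (wvar,'k) mpoly)"
    by (rule JJ_kill[OF _ assms]) simp
  ultimately show ?thesis by (simp add: relations_def)
qed

lemma sum_split_top_aux: "(\<Sum>k<q + (l::nat). f k) = (\<Sum>k<q. f k) + (\<Sum>r<l. f (q + r))"
  by (induction l) (simp_all add: add.assoc)

lemma sum_split_top: "(l::nat) \<le> n \<Longrightarrow> (\<Sum>k<n. f k) = (\<Sum>k<n - l. f k) + (\<Sum>r<l. f (n - l + r))"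
  using sum_split_top_aux[of f "n - l" l] by simp

lemma mvars_lower_minor:
  assumes "card S \<le> n"
  shows "mvars (lower_minor n S :: (wvar, 'k::comm_ring_1) mpoly) \<subseteq> {Xc r c | r c. n - card S \<le> r \<and> r < n}"
  unfolding lower_minor_def
proof (rule order.trans[OF mvars_ldet], intro UN_least)
  fix i j assume "i \<in> {..<card S}" "j \<in> {..<card S}"
  then show "mvars (Vbar (n - card S + i) (sorted_list_of_set S ! j) :: (wvar, 'k) mpoly) \<subseteq> {Xc r c | r c. n - card S \<le> r \<and> r < n}"
  proof -
    have "mvars (Vbar (n - card S + i) (sorted_list_of_set S ! j) :: (wvar, 'k) mpoly) \<subseteq> {Xc (n - card S + i) (sorted_list_of_set S ! j)}"
      unfolding Vbar_def by (rule mvars_mvar)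
    moreover have "n - card S \<le> n - card S + i" "n - card S + i < n" using assms \<open>i \<in> {..<card S}\<close> by auto
    ultimately show ?thesis by blast
  qed
qed

lemma mvars_left_minor:
  shows "mvars (left_minor S :: (wvar, 'k::comm_ring_1) mpoly) \<subseteq> {Yc r c | r c. c < card S}"
  unfolding left_minor_def
proof (rule order.trans[OF mvars_ldet], intro UN_least)
  fix i j assume "i \<in> {..<card S}" "j \<in> {..<card S}"
  then show "mvars (Vsbar (sorted_list_of_set S ! i) j :: (wvar, 'k) mpoly) \<subseteq> {Yc r c | r c. c < card S}"
  proof -
    have "mvars (Vsbar (sorted_list_of_set S ! i) j :: (wvar, 'k) mpoly) \<subseteq> {Yc (sorted_list_of_set S ! i) j}"
      unfolding Vsbar_def by (rule mvars_mvar)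
    then show ?thesis using \<open>j \<in> {..<card S}\<close> by blast
  qed
qed

definition stau :: "nat \<Rightarrow> nat \<Rightarrow> nat \<Rightarrow> wvar \<Rightarrow> (wvar, 'k::comm_ring_1) mpoly" where
  "stau n l m v = (case v of
      Xc k j \<Rightarrow> (if n - l \<le> k then mvar (Xc k j) else 0)
    | Yc i k \<Rightarrow> (if k < m then mvar (Yc i k)
                else if n - l \<le> k \<and> k < n then (\<Sum>s<l. mvar (Xc (n + i) s) * cofactor (XA n l) (k - (n - l)) s)
                else 0))"

lemma stau_Ent:
  assumes lmn: "l + m \<le> n" and j: "j < l"
  shows "msubst (stau n l m) (gen_poly n (Ent i j)) = lower_minor n {0..<l} * (mvar (Xc (n + i) j) :: (wvar, 'k::comm_ring_1) mpoly)"
proof -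
  let ?X = "XA n l :: (wvar, 'k) mpoly mat"
  have ln: "l \<le> n" using lmn by simp
  have "msubst (stau n l m) (gen_poly n (Ent i j)) = (\<Sum>k<n. stau n l m (Yc i k) * stau n l m (Xc k j) :: (wvar, 'k) mpoly)"
    unfolding gen_poly_def by (simp add: msubst_sum msubst_mult Vsbar_def Vbar_def)
  also have "\<dots> = (\<Sum>k<n - l. stau n l m (Yc i k) * stau n l m (Xc k j)) + (\<Sum>r<l. stau n l m (Yc i (n - l + r)) * stau n l m (Xc (n - l + r) j))"
    by (rule sum_split_top[OF ln])
  also have "(\<Sum>k<n - l. stau n l m (Yc i k) * stau n l m (Xc k j)) = (0 :: (wvar, 'k) mpoly)"
    by (rule sum.neutral) (auto simp: stau_def)
  also have "(\<Sum>r<l. stau n l m (Yc i (n - l + r)) * stau n l m (Xc (n - l + r) j))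
      = (\<Sum>r<l. (\<Sum>s<l. mvar (Xc (n + i) s) * cofactor ?X r s) * ?X $$ (r, j))"
  proof (rule sum.cong[OF refl])
    fix r assume r: "r \<in> {..<l}"
    have "\<not> n - l + r < m" using lmn by simp
    then show "stau n l m (Yc i (n - l + r)) * stau n l m (Xc (n - l + r) j) = (\<Sum>s<l. mvar (Xc (n + i) s) * cofactor ?X r s) * ?X $$ (r, j)"
      using r j ln by (simp add: stau_def XA_def Vbar_def)
  qed
  also have "\<dots> = (\<Sum>s<l. mvar (Xc (n + i) s) * (\<Sum>r<l. cofactor ?X r s * ?X $$ (r, j)))"
    unfolding sum_distrib_right sum_distrib_left
    by (subst sum.swap) (simp add: mult_ac)
  also have "\<dots> = (\<Sum>s<l. mvar (Xc (n + i) s) * (if s = j then det ?X else 0))"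
    by (intro sum.cong refl arg_cong2[where f=times] col_cof[OF XA_carrier]) (use j in auto)
  also have "\<dots> = mvar (Xc (n + i) j) * det ?X"
    using j by (simp add: if_distrib[of "\<lambda>x. _ * x"] sum.delta' cong: if_cong)
  finally show ?thesis by (simp add: lower_minor_range mult.commute)
qed

lemma stau_fix_low:
  assumes lmn: "l + m \<le> n" and L: "L \<in> low_labels n l"
  shows "msubst (stau n l m) (gen_poly n L) = (gen_poly n L :: (wvar, 'k::comm_ring_1) mpoly)"
proof -
  obtain S where S: "L = Low S" "card S \<le> l" using L lmn by (auto simp: low_labels_def)
  have cS: "card S \<le> n" using S lmn by simp
  show ?thesis unfolding S(1) gen_poly_def mlab.case
  proof (rule msubst_fix)
    fix v assume "v \<in> mvars (lower_minor n S :: (wvar, 'k) mpoly)"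
    then obtain r c where "v = Xc r c" "n - card S \<le> r" using mvars_lower_minor[OF cS] by blast
    then show "stau n l m v = mvar v" using S(2) by (simp add: stau_def)
  qed
qed

lemma stau_fix_lft:
  assumes lmn: "l + m \<le> n" and L: "L \<in> lft_labels n m"
  shows "msubst (stau n l m) (gen_poly n L) = (gen_poly n L :: (wvar, 'k::comm_ring_1) mpoly)"
proof -
  obtain S where S: "L = Lft S" "card S \<le> m" using L by (auto simp: lft_labels_def)
  show ?thesis unfolding S(1) gen_poly_def mlab.case
  proof (rule msubst_fix)
    fix v assume "v \<in> mvars (left_minor S :: (wvar, 'k) mpoly)"
    then obtain r c where "v = Yc r c" "c < card S" using mvars_left_minor by blast
    then show "stau n l m v = mvar v" using S(2) by (simp add: stau_def)
  qed
qed

lemma d_nonzero: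
  assumes "l \<le> n"
  shows "lower_minor n {0..<l} \<noteq> (0 :: (wvar, 'k::field) mpoly)"
proof
  assume z: "lower_minor n {0..<l} = (0 :: (wvar, 'k) mpoly)"
  have "msubst (evm n l) (lower_minor n {0..<l}) = ldet l (\<lambda>i j. if i = j then 1 else (0 :: (wvar, 'k) mpoly))"
    unfolding lower_minor_def msubst_ldet card_atLeastLessThan diff_zero
    by (rule ldet_cong) (use assms in \<open>auto simp: Vbar_def evm_def\<close>)
  then have "(1 :: (wvar, 'k) mpoly) = 0" using z by (simp add: ldet_one)
  then show False by simp
qed


definition tv :: "nat \<Rightarrow> mlab \<Rightarrow> wvar" where
  "tv n L = (case L of Ent i j \<Rightarrow> Xc (n + i) j | _ \<Rightarrow> Xc 0 0)"

definition gen2 :: "nat \<Rightarrow> nat \<Rightarrow> mlab \<Rightarrow> (wvar, 'k::comm_ring_1) mpoly" where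
  "gen2 n l L = (case L of Ent i j \<Rightarrow> lower_minor n {0..<l} * mvar (Xc (n + i) j) | _ \<Rightarrow> gen_poly n L)"

definition shiftT :: "nat \<Rightarrow> (mlab \<Rightarrow>\<^sub>0 nat) \<Rightarrow> (wvar \<Rightarrow>\<^sub>0 nat)" where
  "shiftT n \<beta> = (\<Sum>v\<in>Poly_Mapping.keys \<beta>. Poly_Mapping.single (tv n v) (Poly_Mapping.lookup \<beta> v))"

lemma gen2_relation:
  assumes lmn: "l + m \<le> n" and p: "p \<in> relations TYPE('k::comm_ring_1) n (M_labels n l m)"
  shows "msubst (gen2 n l) p = (0 :: (wvar, 'k) mpoly)"
proof -
  have "msubst (stau n l m) (msubst (gen_poly n) p) = (0 :: (wvar, 'k) mpoly)"
    using p by (simp add: relations_def)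
  then have "msubst (\<lambda>v. msubst (stau n l m) (gen_poly n v)) p = (0 :: (wvar, 'k) mpoly)"
    by (simp add: msubst_comp)
  moreover have "msubst (\<lambda>v. msubst (stau n l m) (gen_poly n v)) p = (msubst (gen2 n l) p :: (wvar, 'k) mpoly)"
  proof (rule msubst_cong)
    fix L assume "L \<in> mvars p"
    then have L: "L \<in> M_labels n l m" using p by (auto simp: relations_def)
    show "msubst (stau n l m) (gen_poly n L) = (gen2 n l L :: (wvar, 'k) mpoly)"
    proof (cases "L \<in> ent_labels l m")
      case True
      then obtain i j where "L = Ent i j" "j < l" by (auto simp: ent_labels_def)
      then show ?thesis using stau_Ent[OF lmn, of j i] by (simp add: gen2_def)
    next
      case False
      then have "L \<in> low_labels n l \<or> L \<in> lft_labels n m" using L by (auto simp: M_labels_def)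
      moreover have "gen2 n l L = gen_poly n L" using False L
        by (auto simp: M_labels_def low_labels_def lft_labels_def gen2_def)
      ultimately show ?thesis using stau_fix_low[OF lmn] stau_fix_lft[OF lmn] by metis
    qed
  qed
  ultimately show ?thesis by simp
qed

lemma gen2_monomial:
  assumes "Poly_Mapping.keys \<beta> \<subseteq> ent_labels l m"
  shows "msubst (gen2 n l) (Poly_Mapping.single \<beta> 1) =
    (lower_minor n {0..<l} :: (wvar, 'k::comm_ring_1) mpoly) ^ (\<Sum>v\<in>Poly_Mapping.keys \<beta>. Poly_Mapping.lookup \<beta> v)
    * Poly_Mapping.single (shiftT n \<beta>) 1"
proof -
  let ?d = "lower_minor n {0..<l} :: (wvar, 'k) mpoly"
  have g: "gen2 n l v = ?d * mvar (tv n v)" if "v \<in> Poly_Mapping.keys \<beta>" for v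
    using assms that by (auto simp: ent_labels_def gen2_def tv_def)
  have "msubst (gen2 n l) (Poly_Mapping.single \<beta> 1) = (\<Prod>v\<in>Poly_Mapping.keys \<beta>. (?d * mvar (tv n v)) ^ Poly_Mapping.lookup \<beta> v)"
    unfolding msubst_single mev_def by (simp add: g)
  also have "\<dots> = ?d ^ (\<Sum>v\<in>Poly_Mapping.keys \<beta>. Poly_Mapping.lookup \<beta> v)
      * (\<Prod>v\<in>Poly_Mapping.keys \<beta>. Poly_Mapping.single (Poly_Mapping.single (tv n v) (Poly_Mapping.lookup \<beta> v)) 1)"
    unfolding power_mult_distrib prod.distrib power_sum mvar_power ..
  also have "\<dots> = ?d ^ (\<Sum>v\<in>Poly_Mapping.keys \<beta>. Poly_Mapping.lookup \<beta> v) * Poly_Mapping.single (shiftT n \<beta>) 1"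
    unfolding prod_single_one shiftT_def ..
  finally show ?thesis .
qed

lemma lookup_shiftT:
  assumes "Poly_Mapping.keys \<beta> \<subseteq> ent_labels l m"
  shows "Poly_Mapping.lookup (shiftT n \<beta>) (Xc (n + i) j) = Poly_Mapping.lookup \<beta> (Ent i j)"
proof -
  have "Poly_Mapping.lookup (shiftT n \<beta>) (Xc (n + i) j)
      = (\<Sum>v\<in>Poly_Mapping.keys \<beta>. if v = Ent i j then Poly_Mapping.lookup \<beta> v else 0)"
    unfolding shiftT_def lookup_sum lookup_single
  proof (intro sum.cong refl)
    fix v assume "v \<in> Poly_Mapping.keys \<beta>"
    then obtain i' j' where "v = Ent i' j'" using assms by (auto simp: ent_labels_def)
    then show "(Poly_Mapping.lookup \<beta> v when tv n v = Xc (n + i) j) = (if v = Ent i j then Poly_Mapping.lookup \<beta> v else 0)"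
      by (auto simp: tv_def when_def)
  qed
  also have "\<dots> = Poly_Mapping.lookup \<beta> (Ent i j)"
    by (simp add: sum.delta' in_keys_iff)
  finally show ?thesis .
qed

lemma shiftT_inj:
  assumes "Poly_Mapping.keys \<beta> \<subseteq> ent_labels l m" "Poly_Mapping.keys \<beta>' \<subseteq> ent_labels l m"
    and "shiftT n \<beta> = shiftT n \<beta>'"
  shows "\<beta> = \<beta>'"
proof (rule poly_mapping_eqI)
  fix v
  show "Poly_Mapping.lookup \<beta> v = Poly_Mapping.lookup \<beta>' v"
  proof (cases "v \<in> ent_labels l m")
    case True
    then obtain i j where v: "v = Ent i j" by (auto simp: ent_labels_def)
    show ?thesis unfolding v using lookup_shiftT[OF assms(1), of n i j] lookup_shiftT[OF assms(2), of n i j] assms(3) by simp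
  next
    case False
    then have "v \<notin> Poly_Mapping.keys \<beta>" "v \<notin> Poly_Mapping.keys \<beta>'" using assms by auto
    then show ?thesis by (simp add: in_keys_iff)
  qed
qed

lemma keys_sum_pm: "Poly_Mapping.keys (sum b I) \<subseteq> (\<Union>i\<in>I. Poly_Mapping.keys (b i :: 'a \<Rightarrow>\<^sub>0 'c::comm_monoid_add))"
proof (induction I rule: infinite_finite_induct)
  case (insert i I)
  then show ?case using keys_add[of "b i" "sum b I"] by auto
qed auto

lemma keys_shiftT:
  assumes "Poly_Mapping.keys \<beta> \<subseteq> ent_labels l m"
  shows "Poly_Mapping.keys (shiftT n \<beta>) \<subseteq> {Xc r c | r c. n \<le> r}"
proof -
  have "Poly_Mapping.keys (Poly_Mapping.single (tv n v) (Poly_Mapping.lookup \<beta> v)) \<subseteq> {Xc r c | r c. n \<le> r}"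
    if "v \<in> Poly_Mapping.keys \<beta>" for v
    using that assms by (auto simp: ent_labels_def tv_def)
  then show ?thesis unfolding shiftT_def using keys_sum_pm by fastforce
qed


lemma mvars_gen_low:
  assumes "L \<in> low_labels n l"
  shows "mvars (gen_poly n L :: (wvar, 'k::comm_ring_1) mpoly) \<subseteq> {Xc r c | r c. r < n}"
proof -
  obtain S where S: "L = Low S" "card S \<le> n" using assms by (auto simp: low_labels_def)
  show ?thesis unfolding S(1) gen_poly_def mlab.case using mvars_lower_minor[OF S(2)] by blast
qed

lemma mvars_gen_lft:
  assumes "L \<in> lft_labels n m"
  shows "mvars (gen_poly n L :: (wvar, 'k::comm_ring_1) mpoly) \<subseteq> {Yc r c | r c. True}"
proof -
  obtain S where S: "L = Lft S" using assms by (auto simp: lft_labels_def)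
  show ?thesis unfolding S(1) gen_poly_def mlab.case using mvars_left_minor by blast
qed

lemma if_part:
  assumes lmn: "l + m \<le> n" and l: "0 < l" and m: "0 < m"
    and p: "p \<in> relations TYPE('k::field) n (M_labels n l m)"
  shows "p \<in> JJ TYPE('k) n l m"
proof -
  let ?EL = "ent_labels l m"
  let ?M = "M_labels n l m"
  let ?\<phi> = "msubst (gen_poly n) :: (mlab, 'k) mpoly \<Rightarrow> (wvar, 'k) mpoly"
  let ?d = "lower_minor n {0..<l} :: (wvar, 'k) mpoly"
  define K where "K = Poly_Mapping.keys p"
  define I where "I = restr ?EL ` K"
  define P where "P \<beta> = (\<Sum>t\<in>{t \<in> K. restr ?EL t = \<beta>}. Poly_Mapping.single (restr (- ?EL) t) (Poly_Mapping.lookup p t))" for \<beta>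
  have finK: "finite K" by (simp add: K_def)
  have finI: "finite I" using finK by (simp add: I_def)
  have pM: "mvars p \<subseteq> ?M" using p by (simp add: relations_def)
  have tM: "Poly_Mapping.keys t \<subseteq> ?M" if "t \<in> K" for t
    using keys_subset_mvars[of t p] that pM by (auto simp: K_def)
  have Iel: "Poly_Mapping.keys \<beta> \<subseteq> ?EL" if "\<beta> \<in> I" for \<beta>
    using that by (auto simp: I_def keys_restr)
  have IM: "Poly_Mapping.single \<beta> 1 \<in> polys_in TYPE('k) ?M" if "\<beta> \<in> I" for \<beta>
  proof -
    have "\<beta> \<in> restr ?EL ` K" using that unfolding I_def .
    then obtain t where "t \<in> K" "\<beta> = restr ?EL t" by blast
    then have "Poly_Mapping.keys \<beta> \<subseteq> ?M" using tM keys_restr by fastforce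
    then show ?thesis using mvars_single[of \<beta> "1::'k"] by (auto simp: polys_in_def)
  qed
  have PLL: "mvars (P \<beta>) \<subseteq> low_labels n l \<union> lft_labels n m" for \<beta>
    unfolding P_def
  proof (rule mvars_sum_subset)
    fix t assume "t \<in> {t \<in> K. restr ?EL t = \<beta>}"
    then have "Poly_Mapping.keys t \<subseteq> ?M" using tM by blast
    then have tM': "Poly_Mapping.keys t \<subseteq> ?EL \<union> low_labels n l \<union> lft_labels n m"
      by (simp only: M_labels_def)
    have "Poly_Mapping.keys (restr (- ?EL) t) = Poly_Mapping.keys t \<inter> - ?EL" by (rule keys_restr)
    also have "\<dots> \<subseteq> low_labels n l \<union> lft_labels n m" using tM' by auto
    finally have "Poly_Mapping.keys (restr (- ?EL) t) \<subseteq> low_labels n l \<union> lft_labels n m" .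
    then show "mvars (Poly_Mapping.single (restr (- ?EL) t) (Poly_Mapping.lookup p t)) \<subseteq> low_labels n l \<union> lft_labels n m"
      by (rule order.trans[OF mvars_single])
  qed
  have pdec: "p = (\<Sum>\<beta>\<in>I. Poly_Mapping.single \<beta> 1 * P \<beta>)"
  proof -
    have "(\<Sum>\<beta>\<in>I. Poly_Mapping.single \<beta> 1 * P \<beta>)
        = (\<Sum>\<beta>\<in>I. \<Sum>t\<in>{t \<in> K. restr ?EL t = \<beta>}. Poly_Mapping.single t (Poly_Mapping.lookup p t))"
      unfolding P_def sum_distrib_left
    proof (intro sum.cong refl)
      fix \<beta> t assume "t \<in> {t \<in> K. restr ?EL t = \<beta>}"
      then have "\<beta> = restr ?EL t" by simp
      then show "Poly_Mapping.single \<beta> 1 * Poly_Mapping.single (restr (- ?EL) t) (Poly_Mapping.lookup p t)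
          = Poly_Mapping.single t (Poly_Mapping.lookup p t)"
        by (simp add: mult_single restr_split)
    qed
    also have "\<dots> = (\<Sum>t\<in>K. Poly_Mapping.single t (Poly_Mapping.lookup p t))"
      unfolding I_def by (rule sum.image_gen[OF finK, symmetric])
    also have "\<dots> = p" unfolding K_def by (rule pm_expand[symmetric])
    finally show ?thesis by simp
  qed
  have g0: "msubst (gen2 n l) p = (0 :: (wvar, 'k) mpoly)" by (rule gen2_relation[OF lmn p])
  have gP: "msubst (gen2 n l) (P \<beta>) = ?\<phi> (P \<beta>)" for \<beta>
  proof (rule msubst_cong)
    fix L assume "L \<in> mvars (P \<beta>)"
    then have "L \<in> low_labels n l \<union> lft_labels n m" using PLL by blast
    then show "gen2 n l L = gen_poly n L" by (auto simp: low_labels_def lft_labels_def gen2_def)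
  qed
  have "msubst (gen2 n l) p = (\<Sum>\<beta>\<in>I. msubst (gen2 n l) (Poly_Mapping.single \<beta> 1) * msubst (gen2 n l) (P \<beta>) :: (wvar, 'k) mpoly)"
    by (subst pdec) (simp only: msubst_sum msubst_mult)
  also have "\<dots> = (\<Sum>\<beta>\<in>I. (?d ^ (\<Sum>v\<in>Poly_Mapping.keys \<beta>. Poly_Mapping.lookup \<beta> v) * ?\<phi> (P \<beta>))
        * Poly_Mapping.single (shiftT n \<beta>) 1)"
  proof (intro sum.cong refl)
    fix \<beta> assume "\<beta> \<in> I"
    show "msubst (gen2 n l) (Poly_Mapping.single \<beta> 1) * msubst (gen2 n l) (P \<beta>) =
        (?d ^ (\<Sum>v\<in>Poly_Mapping.keys \<beta>. Poly_Mapping.lookup \<beta> v) * ?\<phi> (P \<beta>)) * Poly_Mapping.single (shiftT n \<beta>) 1"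
      unfolding gen2_monomial[OF Iel[OF \<open>\<beta> \<in> I\<close>]] gP by (simp only: mult_ac)
  qed
  finally have z: "(\<Sum>\<beta>\<in>I. (?d ^ (\<Sum>v\<in>Poly_Mapping.keys \<beta>. Poly_Mapping.lookup \<beta> v) * ?\<phi> (P \<beta>))
        * Poly_Mapping.single (shiftT n \<beta>) 1) = 0"
    using g0 by simp
  let ?A = "{Xc r c | r c. r < n} \<union> {Yc r c | r c. True}"
  let ?B = "{Xc r c | r c. n \<le> r}"
  have AB: "?A \<inter> ?B = {}" by auto
  have dA: "mvars ?d \<subseteq> ?A"
    using mvars_lower_minor[of "{0..<l}" n] lmn by auto
  have \<phi>A: "mvars (?\<phi> (P \<beta>)) \<subseteq> ?A" for \<beta>
  proof -
    have "mvars (?\<phi> (P \<beta>)) \<subseteq> (\<Union>v\<in>mvars (P \<beta>). mvars (gen_poly n v :: (wvar, 'k) mpoly))"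
      by (rule mvars_msubst)
    also have "\<dots> \<subseteq> ?A"
    proof (rule UN_least)
      fix v assume "v \<in> mvars (P \<beta>)"
      then have "v \<in> low_labels n l \<or> v \<in> lft_labels n m" using PLL by blast
      then show "mvars (gen_poly n v :: (wvar, 'k) mpoly) \<subseteq> ?A"
        using mvars_gen_low[of v n l] mvars_gen_lft[of v n m] by blast
    qed
    finally show ?thesis .
  qed
  have aA: "mvars (?d ^ (\<Sum>v\<in>Poly_Mapping.keys \<beta>. Poly_Mapping.lookup \<beta> v) * ?\<phi> (P \<beta>)) \<subseteq> ?A" for \<beta>
    by (rule mvars_mult_subset[OF order.trans[OF mvars_power dA] \<phi>A])
  have bB: "mvars (Poly_Mapping.single (shiftT n \<beta>) (1::'k)) \<subseteq> ?B" if "\<beta> \<in> I" for \<beta>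
    using mvars_single[of "shiftT n \<beta>" "1::'k"] keys_shiftT[OF Iel[OF that]] by (rule order.trans)
  have Pz: "?\<phi> (P \<beta>0) = 0" if \<beta>0: "\<beta>0 \<in> I" for \<beta>0
  proof -
    have "(\<Sum>\<beta>\<in>I. mconst (Poly_Mapping.lookup (Poly_Mapping.single (shiftT n \<beta>) 1) (shiftT n \<beta>0))
        * (?d ^ (\<Sum>v\<in>Poly_Mapping.keys \<beta>. Poly_Mapping.lookup \<beta> v) * ?\<phi> (P \<beta>))) = 0"
      by (rule coeff_extract[OF finI AB aA bB z keys_shiftT[OF Iel[OF \<beta>0]]])
    moreover have "(\<Sum>\<beta>\<in>I. mconst (Poly_Mapping.lookup (Poly_Mapping.single (shiftT n \<beta>) 1) (shiftT n \<beta>0))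
        * (?d ^ (\<Sum>v\<in>Poly_Mapping.keys \<beta>. Poly_Mapping.lookup \<beta> v) * ?\<phi> (P \<beta>)))
      = (\<Sum>\<beta>\<in>I. if \<beta> = \<beta>0 then ?d ^ (\<Sum>v\<in>Poly_Mapping.keys \<beta>. Poly_Mapping.lookup \<beta> v) * ?\<phi> (P \<beta>) else 0)"
    proof (intro sum.cong refl)
      fix \<beta> assume \<beta>: "\<beta> \<in> I"
      have "shiftT n \<beta> = shiftT n \<beta>0 \<longleftrightarrow> \<beta> = \<beta>0"
        using shiftT_inj[OF Iel[OF \<beta>] Iel[OF \<beta>0]] by blast
      then show "mconst (Poly_Mapping.lookup (Poly_Mapping.single (shiftT n \<beta>) 1) (shiftT n \<beta>0))
        * (?d ^ (\<Sum>v\<in>Poly_Mapping.keys \<beta>. Poly_Mapping.lookup \<beta> v) * ?\<phi> (P \<beta>))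
        = (if \<beta> = \<beta>0 then ?d ^ (\<Sum>v\<in>Poly_Mapping.keys \<beta>. Poly_Mapping.lookup \<beta> v) * ?\<phi> (P \<beta>) else 0)"
        by (auto simp: lookup_single when_def)
    qed
    ultimately have "?d ^ (\<Sum>v\<in>Poly_Mapping.keys \<beta>0. Poly_Mapping.lookup \<beta>0 v) * ?\<phi> (P \<beta>0) = 0"
      using \<beta>0 finI by (simp add: sum.delta')
    moreover have "?d ^ (\<Sum>v\<in>Poly_Mapping.keys \<beta>0. Poly_Mapping.lookup \<beta>0 v) \<noteq> 0"
      by (rule power_not_zero, rule d_nonzero) (use lmn in simp)
    ultimately show ?thesis by (metis mult_eq_0_iff)
  qed
  have PJ: "P \<beta> \<in> JJ TYPE('k) n l m" if "\<beta> \<in> I" for \<beta>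
  proof (rule tensor[where VA = "{Xc r c | r c. True}" and VB = "{Yc r c | r c. True}"])
    show "low_labels n l \<subseteq> ?M" "lft_labels n m \<subseteq> ?M" by (auto simp: M_labels_def)
    show "{Xc r c | r c. True} \<inter> {Yc r c | r c. True} = {}" by auto
    show "mvars (gen_poly n L :: (wvar, 'k) mpoly) \<subseteq> {Xc r c | r c. True}" if "L \<in> low_labels n l" for L
      using mvars_gen_low[OF that] by blast
    show "mvars (gen_poly n L :: (wvar, 'k) mpoly) \<subseteq> {Yc r c | r c. True}" if "L \<in> lft_labels n m" for L
      using mvars_gen_lft[OF that] by blast
    show "mvars (P \<beta>) \<subseteq> low_labels n l \<union> lft_labels n m" by (rule PLL)
    show "msubst (gen_poly n) (P \<beta>) = (0 :: (wvar, 'k) mpoly)" by (rule Pz[OF that])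
  qed
  show ?thesis
    by (subst pdec, rule JJ_sum, rule JJ_mult[OF IM PJ])
qed

theorem theorem4:
  fixes n l m :: nat
  assumes "alg_closed_field TYPE('k::field_char_0)"
    and "0 < l" and "0 < m"
  shows "relations TYPE('k) n (M_labels n l m) =
           ideal_gen_in (polys_in TYPE('k) (M_labels n l m))
             (relations TYPE('k) n (low_labels n l) \<union> relations TYPE('k) n (lft_labels n m))
         \<longleftrightarrow> l + m \<le> n"
proof
  assume eq: "relations TYPE('k) n (M_labels n l m) = JJ TYPE('k) n l m"
  show "l + m \<le> n"
  proof (rule ccontr)
    assume "\<not> l + m \<le> n"
    then have "n < l + m" by simp
    from only_if_part[OF assms(2,3) this, where 'k='k] eq show False by simp
  qed
next
  assume lmn: "l + m \<le> n"
  show "relations TYPE('k) n (M_labels n l m) = JJ TYPE('k) n l m"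
    using if_part[OF lmn assms(2,3)] JJ_sub_relations by blast
qed

end
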